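(* The topological group $\pi_{1}(HA,(0,0))$ has exactly one nonempty open subset (i.e., it carries the indiscrete topology).
   Context: For $n\geq1$ let $X_{n}\subset\mathbb{R}^{2}$ be the circle of radius $\frac1n$ centered at $(\frac1n,0)$ and $Y_{1}=\bigcup_{i\geq1}X_{i}$ (the Hawaiian earring). Let $A_{n}\subset\mathbb{R}^2$ be the closed pinched annulus bounded by $X_{n}\cup X_{n+1}$ and $Y^{n}=Y_{1}\cup A_{1}\cup\dots\cup A_{n}$ with the Euclidean subspace topology. The harmonic archipelago $HA$ has underlying set $\bigcup_{n}Y^{n}$, with a topology such that each $Y^{n}$ inherits its usual topology and: (1) there is a sequence $z_{n}\in\operatorname{int}(A_{n})$ such that $\{z_{1},z_{2},\dots\}$ has no subsequential limit, and (2) if $p\in HA$ is a subsequential limit of a sequence $(y_n)$ with $y_{n}\in\operatorname{int}(A_{n})$ for all $n$, then $p=(0,0)$. The topology on $\pi_1(HA,(0,0))$: let $L=\{f:[0,1]\to HA \mid f \text{ continuous},\ f(0)=f(1)=(0,0)\}$ with the uniform (compact-open) topology; $\pi_{1}(HA,(0,0))$ is the set of path components of $L$ with the quotient topology, which makes it a topological group. *)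

theory Defs
  imports "HOL-Analysis.Analysis"
begin

text \<open>Points of the plane are pairs of reals (Euclidean metric/topology).
  The circle X n (n \<ge> 1) has radius 1/n and centre (1/n,0).\<close>

definition hcentre :: "nat \<Rightarrow> real \<times> real" where
  "hcentre n = (1 / real n, 0)"

definition Xc :: "nat \<Rightarrow> (real \<times> real) set" where
  "Xc n = sphere (hcentre n) (1 / real n)"

definition Y1 :: "(real \<times> real) set" where
  "Y1 = (\<Union>n\<in>{1..}. Xc n)"

definition Ann :: "nat \<Rightarrow> (real \<times> real) set" where
  "Ann n = cball (hcentre n) (1 / real n) - ball (hcentre (Suc n)) (1 / real (Suc n))"

definition Yup :: "nat \<Rightarrow> (real \<times> real) set" where
  "Yup n = Y1 \<union> (\<Union>k\<in>{1..n}. Ann k)"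

definition HA :: "(real \<times> real) set" where
  "HA = (\<Union>n\<in>{1..}. Yup n)"

text \<open>Sequences are indexed from 0, the k-th term lying in int(A_(k+1)).
  "p is a subsequential limit of y" = some subsequence converges to p.\<close>
definition subseq_limit :: "'a topology \<Rightarrow> (nat \<Rightarrow> 'a) \<Rightarrow> 'a \<Rightarrow> bool" where
  "subseq_limit T y p \<longleftrightarrow> (\<exists>r. strict_mono r \<and> limitin T (y \<circ> r) p sequentially)"

definition HA_topology :: "(real \<times> real) topology \<Rightarrow> bool" where
  "HA_topology T \<longleftrightarrow>
     topspace T = HA \<and>
     (\<forall>n\<ge>1. subtopology T (Yup n) = top_of_set (Yup n)) \<and>
     (\<exists>z. (\<forall>k. z k \<in> interior (Ann (Suc k))) \<and> (\<forall>p. \<not> subseq_limit T z p)) \<and>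
     (\<forall>y p. (\<forall>k. y k \<in> interior (Ann (Suc k))) \<and> subseq_limit T y p \<longrightarrow> p = (0, 0))"

text \<open>The space L of loops [0,1] \<rightarrow> HA based at (0,0).  Loops are represented
  by functions real \<Rightarrow> real \<times> real that are extensional on [0,1].\<close>
definition loops :: "(real \<times> real) topology \<Rightarrow> (real \<Rightarrow> real \<times> real) set" where
  "loops T = {f. continuous_map (top_of_set {0..1}) T f \<and> f 0 = (0, 0) \<and> f 1 = (0, 0)
                  \<and> f \<in> extensional {0..1}}"

text \<open>Compact-open topology on L: generated by the subbasic sets
  {f \<in> L. f ` K \<subseteq> U}, K \<subseteq> [0,1] compact, U open in T (K = {} gives L itself).\<close>
definition compact_open_loops :: "(real \<times> real) topology \<Rightarrow> (real \<Rightarrow> real \<times> real) topology" where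
  "compact_open_loops T = topology_generated_by
     {{f \<in> loops T. f ` K \<subseteq> U} | K U. K \<subseteq> {0..1} \<and> compact K \<and> openin T U}"

definition quotient_topology :: "'a topology \<Rightarrow> ('a \<Rightarrow> 'b) \<Rightarrow> 'b topology" where
  "quotient_topology X q =
     topology (\<lambda>U. U \<subseteq> q ` topspace X \<and> openin X {x \<in> topspace X. q x \<in> U})"

definition pi1_top :: "(real \<times> real) topology \<Rightarrow> (real \<Rightarrow> real \<times> real) set topology" where
  "pi1_top T = quotient_topology (compact_open_loops T) (path_component_of_set (compact_open_loops T))"

end

theory Submission
  imports Defs
begin

definition qq :: "real \<times> real \<Rightarrow> real" where
  "qq z = fst z ^ 2 + snd z ^ 2"

definition rho :: "real \<times> real \<Rightarrow> real" where
  "rho z = 2 * fst z / qq z"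

lemma qq_pos: "z \<noteq> 0 \<Longrightarrow> qq z > 0"
  unfolding qq_def
  by (cases z) (auto simp: zero_prod_def sum_power2_gt_zero_iff)

lemma qq_norm: "qq z = (norm z)^2"
  unfolding qq_def by (cases z) (simp add: norm_Pair)

lemma dist_hc_sq:
  "(dist z (hcentre n))^2 = qq z - 2 * fst z / real n + (1/real n)^2"
proof (cases z)
  case (Pair a b)
  have "(dist z (hcentre n))^2 = (a - 1/real n)^2 + b^2"
    unfolding Pair hcentre_def dist_Pair_Pair by (simp add: dist_real_def)
  also have "\<dots> = a^2 + b^2 - 2 * a / real n + (1/real n)^2"
    by (simp add: power2_diff field_simps)
  finally show ?thesis unfolding qq_def Pair by simp
qed

lemma cball_hc:
  assumes "n \<ge> 1" "z \<noteq> 0"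
  shows "z \<in> cball (hcentre n) (1/real n) \<longleftrightarrow> real n \<le> rho z"
proof -
  have q: "qq z > 0" using qq_pos assms by auto
  have "z \<in> cball (hcentre n) (1/real n) \<longleftrightarrow> (dist z (hcentre n))^2 \<le> (1/real n)^2"
    by (simp add: dist_commute power_mono_iff)
  also have "\<dots> \<longleftrightarrow> qq z \<le> 2 * fst z / real n" by (simp add: dist_hc_sq)
  also have "\<dots> \<longleftrightarrow> real n \<le> rho z" using q assms(1) unfolding rho_def
    by (simp add: field_simps)
  finally show ?thesis .
qed

lemma ball_hc:
  assumes "n \<ge> 1" "z \<noteq> 0"
  shows "z \<in> ball (hcentre n) (1/real n) \<longleftrightarrow> real n < rho z"
proof -
  have q: "qq z > 0" using qq_pos assms by auto
  have "z \<in> ball (hcentre n) (1/real n) \<longleftrightarrow> (dist z (hcentre n))^2 < (1/real n)^2"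
    using power_mono_iff[of "1/real n" "dist z (hcentre n)" 2]
    by (simp add: dist_commute not_le[symmetric] del: power_mono_iff)
  also have "\<dots> \<longleftrightarrow> qq z < 2 * fst z / real n" by (simp add: dist_hc_sq)
  also have "\<dots> \<longleftrightarrow> real n < rho z" using q assms(1) unfolding rho_def
    by (simp add: field_simps)
  finally show ?thesis .
qed

lemma sphere_hc:
  assumes "n \<ge> 1" "z \<noteq> 0"
  shows "z \<in> Xc n \<longleftrightarrow> rho z = real n"
  using cball_hc[OF assms] ball_hc[OF assms] unfolding Xc_def
  by (auto simp: dist_commute)

lemma zero_in_hc:
  "0 \<in> Xc n" "0 \<in> cball (hcentre n) (1/real n)" "0 \<notin> ball (hcentre n) (1/real n)"
  unfolding Xc_def hcentre_def by (auto simp: dist_Pair_Pair zero_prod_def)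

lemma rho_fst_pos: "z \<noteq> 0 \<Longrightarrow> 0 < rho z \<Longrightarrow> fst z > 0"
  using qq_pos[of z] unfolding rho_def by (simp add: zero_less_divide_iff)

lemma Y1_char: "z \<in> Y1 \<longleftrightarrow> z = 0 \<or> (\<exists>m\<ge>1. rho z = real m)"
proof (cases "z = 0")
  case True
  then show ?thesis unfolding Y1_def using zero_in_hc(1)[of 1] by auto
next
  case False
  then show ?thesis unfolding Y1_def using sphere_hc[OF _ False] by auto
qed

lemma Ann_char:
  assumes "k \<ge> 1"
  shows "z \<in> Ann k \<longleftrightarrow> z = 0 \<or> (real k \<le> rho z \<and> rho z \<le> real k + 1)"
proof (cases "z = 0")
  case True
  then show ?thesis unfolding Ann_def using zero_in_hc(2)[of k] zero_in_hc(3)[of "Suc k"] by blast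
next
  case False
  have "Suc k \<ge> 1" by simp
  then show ?thesis unfolding Ann_def using cball_hc[OF assms False] ball_hc[of "Suc k", OF _ False] False
    by auto
qed

lemma Ann_char_nz:
  assumes "k \<ge> 1" "z \<noteq> 0"
  shows "z \<in> Ann k \<longleftrightarrow> real k \<le> rho z \<and> rho z \<le> real k + 1"
  using Ann_char[OF assms(1)] assms(2) by auto

lemma floor_facts:
  assumes "1 \<le> (r::real)"
  shows "nat \<lfloor>r\<rfloor> \<ge> 1" "real (nat \<lfloor>r\<rfloor>) \<le> r" "r < real (nat \<lfloor>r\<rfloor>) + 1"
  using assms by (auto simp: le_nat_iff)

lemma Yup_char:
  "z \<in> Yup n \<longleftrightarrow> z = 0 \<or> (\<exists>m\<ge>1. rho z = real m) \<or> (n \<ge> 1 \<and> 1 \<le> rho z \<and> rho z \<le> real n + 1)"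
proof (cases "z = 0")
  case True
  then show ?thesis unfolding Yup_def by (auto simp: Y1_char)
next
  case False
  have "(\<exists>k\<in>{1..n}. z \<in> Ann k) \<longleftrightarrow> (n \<ge> 1 \<and> 1 \<le> rho z \<and> rho z \<le> real n + 1)"
  proof
    assume "\<exists>k\<in>{1..n}. z \<in> Ann k"
    then obtain k where k: "1 \<le> k" "k \<le> n" "z \<in> Ann k" by auto
    then show "n \<ge> 1 \<and> 1 \<le> rho z \<and> rho z \<le> real n + 1"
      using Ann_char_nz[OF k(1) False] by auto
  next
    assume a: "n \<ge> 1 \<and> 1 \<le> rho z \<and> rho z \<le> real n + 1"
    show "\<exists>k\<in>{1..n}. z \<in> Ann k"
    proof (cases "rho z = real n + 1")
      case True
      then show ?thesis using a Ann_char_nz[of n z] False by (intro bexI[of _ n]) auto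
    next
      case F: False
      define k where "k = nat \<lfloor>rho z\<rfloor>"
      have k: "k \<ge> 1" "real k \<le> rho z" "rho z < real k + 1" using floor_facts[of "rho z"] a k_def by auto
      have "k \<le> n" using k a F by linarith
      then show ?thesis using k Ann_char_nz[of k z] False by (intro bexI[of _ k]) auto
    qed
  qed
  then show ?thesis unfolding Yup_def using False by (auto simp: Y1_char)
qed

lemma HA_char: "z \<in> HA \<longleftrightarrow> z = 0 \<or> 1 \<le> rho z"
proof
  assume "z \<in> HA"
  then obtain n where "z \<in> Yup n" unfolding HA_def by auto
  then show "z = 0 \<or> 1 \<le> rho z" unfolding Yup_char by auto
next
  assume a: "z = 0 \<or> 1 \<le> rho z"
  obtain n0 :: nat where "rho z \<le> real n0" using real_arch_simple by blast
  then obtain n :: nat where n: "rho z \<le> real n + 1" "n \<ge> 1"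
    by (intro that[of "Suc n0"]) auto
  then have "z \<in> Yup n" using a unfolding Yup_char by auto
  then show "z \<in> HA" unfolding HA_def using n by auto
qed

lemma Yup_mono: "m \<le> n \<Longrightarrow> Yup m \<subseteq> Yup n"
  unfolding Yup_def by auto

lemma Yup_HA: "Yup n \<subseteq> HA"
proof
  fix z assume "z \<in> Yup n" then show "z \<in> HA" unfolding Yup_char HA_char by auto
qed

lemma zero_Yup: "0 \<in> Yup n" "0 \<in> HA" "0 \<in> Y1"
  unfolding Yup_char HA_char Y1_char by auto

lemma Y1_Yup: "Y1 \<subseteq> Yup n"
  unfolding Yup_def by auto

definition open_ann :: "nat \<Rightarrow> (real \<times> real) set" where
  "open_ann k = ball (hcentre k) (1/real k) - cball (hcentre (Suc k)) (1/real (Suc k))"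

lemma open_ann_open: "open (open_ann k)"
  unfolding open_ann_def by (simp add: open_Diff)

lemma open_ann_char:
  assumes "k \<ge> 1"
  shows "z \<in> open_ann k \<longleftrightarrow> z \<noteq> 0 \<and> real k < rho z \<and> rho z < real k + 1"
proof (cases "z = 0")
  case True
  then show ?thesis unfolding open_ann_def using zero_in_hc(3)[of k] by blast
next
  case False
  have "Suc k \<ge> 1" by simp
  then show ?thesis unfolding open_ann_def using ball_hc[OF assms False] cball_hc[of "Suc k", OF _ False] False
    by auto
qed

lemma open_ann_interior:
  assumes "k \<ge> 1"
  shows "open_ann k \<subseteq> interior (Ann k)"
proof -
  have "open_ann k \<subseteq> Ann k" using open_ann_char[OF assms] Ann_char[OF assms] by auto
  then show ?thesis by (simp add: interior_maximal open_ann_open)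
qed

definition idx :: "real \<times> real \<Rightarrow> nat" where
  "idx z = nat \<lfloor>rho z\<rfloor>"

lemma not_Yup:
  assumes "x \<in> HA" "x \<notin> Yup n"
  shows "x \<noteq> 0" "idx x > n" "idx x \<ge> 1" "x \<in> open_ann (idx x)" "x \<in> interior (Ann (idx x))"
proof -
  show x0: "x \<noteq> 0" using assms zero_Yup by auto
  have r1: "1 \<le> rho x" using assms x0 HA_char by auto
  have k: "idx x \<ge> 1" "real (idx x) \<le> rho x" "rho x < real (idx x) + 1"
    using floor_facts[OF r1] unfolding idx_def by auto
  then show "idx x \<ge> 1" by simp
  have ne: "rho x \<noteq> real (idx x)" using assms(2) k unfolding Yup_char by auto
  then have "real (idx x) < rho x" using k by simp
  then show oa: "x \<in> open_ann (idx x)" using open_ann_char[OF k(1)] k x0 by auto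
  show "x \<in> interior (Ann (idx x))" using open_ann_interior[OF k(1)] oa by auto
  show "idx x > n"
  proof (rule ccontr)
    assume "\<not> n < idx x"
    then have "rho x \<le> real n + 1" using k by linarith
    then show False using assms(2) r1 k unfolding Yup_char by auto
  qed
qed


definition J :: "real \<times> real \<Rightarrow> real \<times> real" where
  "J w = (fst w / qq w, snd w / qq w)"

lemma qq_J: "qq (J w) = 1 / qq w"
proof (cases "w = 0")
  case True then show ?thesis by (simp add: J_def qq_def)
next
  case False
  then have q: "qq w > 0" by (rule qq_pos)
  show ?thesis unfolding J_def using q unfolding qq_def
    by (simp add: power_divide add_divide_distrib[symmetric] power2_eq_square)
qed

lemma J_nz: "w \<noteq> 0 \<Longrightarrow> J w \<noteq> 0"
proof
  assume "w \<noteq> 0" "J w = 0"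
  then have "qq (J w) = 0" by (simp add: qq_def)
  moreover have "qq (J w) > 0" using qq_J[of w] qq_pos[OF \<open>w \<noteq> 0\<close>] by simp
  ultimately show False by simp
qed

lemma J_J: "J (J w) = w"
proof (cases "w = 0")
  case True then show ?thesis by (simp add: J_def qq_def zero_prod_def)
next
  case False
  then have q: "qq w > 0" by (rule qq_pos)
  show ?thesis using qq_J[of w] q unfolding J_def by (cases w) auto
qed

lemma rho_J: "rho z = 2 * fst (J z)"
  unfolding rho_def J_def by simp

lemma rho_of_J: "rho (J w) = 2 * fst w"
  using rho_J[of "J w"] J_J by simp

definition Phi :: "nat \<Rightarrow> real \<Rightarrow> real \<times> real \<Rightarrow> real \<times> real" where
  "Phi N s z = (if z = 0 then 0 else
     J (max (fst (J z)) ((1-s) * fst (J z) + s * (real N + 1) / 2), snd (J z)))"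

lemma Phi_zero [simp]: "Phi N s 0 = 0"
  by (simp add: Phi_def)

lemma Phi_rho:
  assumes "z \<noteq> 0" "1 \<le> rho z"
  shows "Phi N s z \<noteq> 0" "rho (Phi N s z) = max (rho z) ((1-s) * rho z + s * (real N + 1))"
proof -
  define u where "u = fst (J z)"
  have u: "u > 0" using assms rho_J[of z] u_def by simp
  define p where "p = (max u ((1-s) * u + s * (real N + 1) / 2), snd (J z))"
  have pnz: "p \<noteq> 0" using u unfolding p_def by (auto simp: zero_prod_def)
  have ph: "Phi N s z = J p" using assms unfolding Phi_def p_def u_def by simp
  show "Phi N s z \<noteq> 0" using ph J_nz[OF pnz] by simp
  have "rho (Phi N s z) = 2 * max u ((1-s) * u + s * (real N + 1) / 2)"
    using ph rho_of_J[of p] unfolding p_def by simp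
  also have "\<dots> = max (rho z) ((1-s) * rho z + s * (real N + 1))"
    unfolding rho_J u_def[symmetric] by (simp add: max_def field_simps)
  finally show "rho (Phi N s z) = max (rho z) ((1-s) * rho z + s * (real N + 1))" .
qed

lemma Phi_0: "Phi N 0 z = z"
  unfolding Phi_def using J_J[of z] by (cases "J z") auto

lemma Phi_id:
  assumes "z = 0 \<or> real N + 1 \<le> rho z" "0 \<le> s" "s \<le> 1"
  shows "Phi N s z = z"
proof (cases "z = 0")
  case True then show ?thesis by simp
next
  case False
  then have r: "real N + 1 \<le> 2 * fst (J z)" using assms rho_J by auto
  have "(1 - s) * fst (J z) + s * (real N + 1) / 2 \<le> fst (J z)"
  proof -
    have "(real N + 1) / 2 \<le> fst (J z)" using r by simp
    then have "s * ((real N + 1) / 2) \<le> s * fst (J z)" by (rule mult_left_mono) (use assms in auto)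
    then show ?thesis by (simp add: algebra_simps)
  qed
  then have "max (fst (J z)) ((1 - s) * fst (J z) + s * (real N + 1) / 2) = fst (J z)" by simp
  then show ?thesis unfolding Phi_def using False J_J[of z] by simp
qed

lemma Phi_qq:
  assumes "z \<in> HA" "0 \<le> s" "s \<le> 1"
  shows "qq (Phi N s z) \<le> qq z"
proof (cases "z = 0")
  case True then show ?thesis by simp
next
  case False
  then have r: "1 \<le> rho z" using assms HA_char by auto
  define u where "u = fst (J z)"
  have u: "u > 0" using r rho_J[of z] u_def by simp
  define p where "p = (max u ((1-s) * u + s * (real N + 1) / 2), snd (J z))"
  have ph: "Phi N s z = J p" using False unfolding Phi_def p_def u_def by simp
  have "qq (J z) \<le> qq p"
  proof -
    have "u^2 \<le> (max u ((1-s) * u + s * (real N + 1) / 2))^2"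
      using u by (intro power_mono) auto
    then show ?thesis unfolding p_def qq_def u_def by simp
  qed
  moreover have "qq (J z) > 0" using qq_pos J_nz False by blast
  ultimately have "1 / qq p \<le> 1 / qq (J z)" by (intro divide_left_mono) auto
  then show ?thesis using ph qq_J[of p] qq_J[of "J z"] J_J[of z] by simp
qed

lemma Phi_norm:
  assumes "z \<in> HA" "0 \<le> s" "s \<le> 1"
  shows "norm (Phi N s z) \<le> norm z"
  using Phi_qq[OF assms, of N] unfolding qq_norm by (simp add: power_mono_iff)

lemma Phi_Yup:
  assumes "z \<in> Yup n" "0 \<le> s" "s \<le> 1" "N \<ge> 1"
  shows "Phi N s z \<in> Yup (max n N)"
proof (cases "z = 0 \<or> real N + 1 \<le> rho z")
  case True
  then show ?thesis using Phi_id[OF True assms(2,3)] assms(1) Yup_mono[of n "max n N"] by auto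
next
  case False
  then have z0: "z \<noteq> 0" and lt: "rho z < real N + 1" by auto
  have r: "1 \<le> rho z" using assms(1) z0 unfolding Yup_char by auto
  have "s * rho z \<le> s * (real N + 1)" using lt by (intro mult_left_mono) (use assms in auto)
  then have "rho z \<le> (1-s) * rho z + s * (real N + 1)"
    by (simp add: algebra_simps)
  moreover have "(1-s) * rho z \<le> (1-s) * (real N + 1)"
    using lt by (intro mult_left_mono) (use assms in auto)
  then have "(1-s) * rho z + s * (real N + 1) \<le> real N + 1"
    by (simp add: algebra_simps)
  ultimately have "1 \<le> rho (Phi N s z) \<and> rho (Phi N s z) \<le> real N + 1"
    using Phi_rho[OF z0 r, of N s] r by auto
  then have "Phi N s z \<in> Yup N" unfolding Yup_char using assms(4) by auto
  then show ?thesis using Yup_mono[of N "max n N"] by auto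
qed

lemma HA_Yup: "z \<in> HA \<Longrightarrow> \<exists>n\<ge>1. z \<in> Yup n"
  unfolding HA_def by auto

lemma Phi_HA:
  assumes "z \<in> HA" "0 \<le> s" "s \<le> 1" "N \<ge> 1"
  shows "Phi N s z \<in> HA"
  using HA_Yup[OF assms(1)] Phi_Yup[OF _ assms(2-4)] Yup_HA by blast

lemma Phi_1:
  assumes "z \<noteq> 0" "1 \<le> rho z" "rho z < real N + 1"
  shows "Phi N 1 z \<in> Xc (N+1)"
proof -
  have "rho (Phi N 1 z) = real N + 1" using Phi_rho[OF assms(1,2), of N 1] assms(3) by simp
  then show ?thesis using sphere_hc[of "N+1" "Phi N 1 z"] Phi_rho[OF assms(1,2)] by simp
qed


lemma J_cont: "w \<noteq> 0 \<Longrightarrow> isCont J w"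
proof -
  assume w: "w \<noteq> 0"
  have q: "fst w ^ 2 + snd w ^ 2 \<noteq> 0" using qq_pos[OF w] unfolding qq_def by (metis less_irrefl)
  have "isCont (\<lambda>w. (fst w / (fst w ^ 2 + snd w ^ 2), snd w / (fst w ^ 2 + snd w ^ 2))) w"
    using q by (intro continuous_intros) 
  then show ?thesis unfolding J_def qq_def by simp
qed

lemma Phi_cont:
  "continuous_on ({0..1} \<times> HA) (\<lambda>p. Phi N (fst p) (snd p))"
  unfolding continuous_on_eq_continuous_within
proof
  fix p :: "real \<times> (real \<times> real)"
  assume p: "p \<in> {0..1} \<times> HA"
  show "continuous (at p within {0..1} \<times> HA) (\<lambda>p. Phi N (fst p) (snd p))"
  proof (cases "snd p = 0")
    case True
    show ?thesis unfolding continuous_within_eps_delta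
    proof (intro allI impI)
      fix e :: real assume e: "e > 0"
      show "\<exists>d>0. \<forall>x'\<in>{0..1} \<times> HA. dist x' p < d \<longrightarrow>
             dist (Phi N (fst x') (snd x')) (Phi N (fst p) (snd p)) < e"
      proof (intro exI[of _ e] conjI ballI impI e)
        fix x' assume x': "x' \<in> {0..1} \<times> HA" and d: "dist x' p < e"
        have "norm (snd x') = dist (snd x') (snd p)" using True by (simp add: dist_norm)
        also have "\<dots> \<le> dist x' p" by (rule dist_snd_le)
        finally have "norm (snd x') < e" using d by simp
        moreover have "norm (Phi N (fst x') (snd x')) \<le> norm (snd x')"
          using x' by (intro Phi_norm) auto
        ultimately show "dist (Phi N (fst x') (snd x')) (Phi N (fst p) (snd p)) < e"
          using True by (simp add: dist_norm)
      qed
    qed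
  next
    case False
    define g where "g = (\<lambda>p::real \<times> (real \<times> real). J (max (fst (J (snd p)))
        ((1 - fst p) * fst (J (snd p)) + fst p * (real N + 1) / 2), snd (J (snd p))))"
    have u: "fst (J (snd p)) > 0"
      using False p HA_char[of "snd p"] rho_J[of "snd p"] by auto
    define h where "h = (\<lambda>x::real \<times> (real \<times> real). J (snd x))"
    have "isCont snd p" by (intro continuous_intros)
    then have c1: "isCont h p" unfolding h_def using J_cont[OF False] by (rule isCont_o2)
    have c2: "isCont (\<lambda>x. (max (fst (h x)) ((1 - fst x) * fst (h x) + fst x * (real N + 1) / 2),
              snd (h x))) p"
      using c1 by (intro continuous_intros) auto
    have c3: "isCont J (max (fst (h p)) ((1 - fst p) * fst (h p) + fst p * (real N + 1) / 2),
              snd (h p))"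
      using u unfolding h_def by (intro J_cont) (auto simp: zero_prod_def)
    have "isCont g p"
      using isCont_o2[OF c2 c3] unfolding g_def h_def by simp
    then have c: "continuous (at p within {0..1} \<times> HA) g"
      by (rule continuous_at_imp_continuous_within)
    show ?thesis
    proof (rule continuous_transform_within[OF c, of "norm (snd p)"])
      show "0 < norm (snd p)" using False by simp
      show "p \<in> {0..1} \<times> HA" by (rule p)
      fix x' assume "x' \<in> {0..1} \<times> HA" "dist x' p < norm (snd p)"
      then have "dist (snd x') (snd p) < norm (snd p)" using dist_snd_le[of x' p] by linarith
      then have "snd x' \<noteq> 0" by (auto simp: dist_norm)
      then show "g x' = Phi N (fst x') (snd x')" unfolding g_def Phi_def by simp
    qed
  qed
qed


lemma open_ann_disj:
  assumes "k > n" "k \<ge> 1"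
  shows "open_ann k \<inter> Yup n = {}"
proof -
  { fix z assume z: "z \<in> open_ann k" "z \<in> Yup n"
    then have a: "z \<noteq> 0" "real k < rho z" "rho z < real k + 1" using open_ann_char[OF assms(2)] by auto
    then consider m where "m \<ge> 1" "rho z = real m" | "rho z \<le> real n + 1" using z(2) unfolding Yup_char by auto
    then have False
    proof cases
      case 1 then show ?thesis using a by (metis of_nat_1 of_nat_add of_nat_less_iff less_Suc_eq_le not_less Suc_eq_plus1 add.commute)
    next
      case 2 then show ?thesis using a assms by (metis Suc_leI not_less of_nat_Suc of_nat_le_iff add.commute order_le_less_trans less_le_not_le)
    qed }
  then show ?thesis by auto
qed

lemma Xc_small:
  assumes "m \<ge> 1" "z \<in> Xc m"
  shows "norm z \<le> 2 / real m"
proof (cases "z = 0")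
  case True then show ?thesis by simp
next
  case False
  have r: "rho z = real m" using sphere_hc[OF assms(1) False] assms(2) by simp
  have q: "qq z > 0" using qq_pos[OF False] .
  have "qq z = 2 * fst z / real m" using r q assms(1) unfolding rho_def by (simp add: field_simps)
  also have "\<dots> \<le> 2 * norm z / real m"
  proof -
    have "fst z \<le> norm z" using norm_fst_le[of "fst z" "snd z"] by simp
    then show ?thesis using assms(1) by (intro divide_right_mono mult_left_mono) auto
  qed
  finally have "norm z ^ 2 \<le> 2 * norm z / real m" unfolding qq_norm .
  then have "norm z * norm z \<le> (2 / real m) * norm z" by (simp add: power2_eq_square)
  moreover have "norm z > 0" using False by simp
  ultimately show ?thesis by (metis mult_le_cancel_right_pos)
qed

lemma Xc_Y1: "m \<ge> 1 \<Longrightarrow> Xc m \<subseteq> Y1"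
  unfolding Y1_def by auto


locale hat =
  fixes T :: "(real \<times> real) topology"
  assumes HT: "HA_topology T"
begin

lemma topT: "topspace T = HA"
  using HT unfolding HA_topology_def by auto

lemma subT: "n \<ge> 1 \<Longrightarrow> subtopology T (Yup n) = top_of_set (Yup n)"
  using HT unfolding HA_topology_def by auto

lemma Yup_closedin:
  assumes "n \<ge> 1"
  shows "closedin T (Yup n)"
  unfolding closedin_def
proof
  show "Yup n \<subseteq> topspace T" using Yup_HA topT by auto
  show "openin T (topspace T - Yup n)"
  proof (subst openin_subopen, intro ballI)
    fix x assume x: "x \<in> topspace T - Yup n"
    then have xh: "x \<in> HA" "x \<notin> Yup n" using topT by auto
    obtain m where m: "m \<ge> 1" "x \<in> Yup m" using HA_Yup[OF xh(1)] by auto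
    have k: "idx x > n" "idx x \<ge> 1" "x \<in> open_ann (idx x)" using not_Yup[OF xh] by auto
    have "openin (top_of_set (Yup m)) (Yup m \<inter> open_ann (idx x))"
      using open_ann_open by (auto intro: openin_open_Int)
    then have "openin (subtopology T (Yup m)) (Yup m \<inter> open_ann (idx x))" using subT[OF m(1)] by simp
    then obtain V where V: "openin T V" "Yup m \<inter> open_ann (idx x) = V \<inter> Yup m"
      unfolding openin_subtopology by auto
    have "m > n" using m xh Yup_mono[of m n] by (meson not_less subsetD)
    then have "V \<inter> Yup n \<subseteq> open_ann (idx x) \<inter> Yup n" using V(2) Yup_mono[of n m] by auto
    then have "V \<inter> Yup n = {}" using open_ann_disj[OF k(1) k(2)] by auto
    moreover have "x \<in> V" using V(2) m(2) k(3) by auto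
    moreover have "V \<subseteq> topspace T" using V(1) openin_subset by auto
    ultimately show "\<exists>U. openin T U \<and> x \<in> U \<and> U \<subseteq> topspace T - Yup n"
      using V(1) by (intro exI[of _ V]) auto
  qed
qed

lemma escape:
  assumes lim: "limitin T x p sequentially" and xh: "\<And>j. x j \<in> HA"
    and fr: "\<And>n j0. \<exists>j\<ge>j0. x j \<notin> Yup n"
  shows "p = 0"
proof -
  obtain z where z: "\<And>k. z k \<in> interior (Ann (Suc k))"
    using HT unfolding HA_topology_def by auto
  have c2: "\<And>y p. (\<forall>k. y k \<in> interior (Ann (Suc k))) \<Longrightarrow> subseq_limit T y p \<Longrightarrow> p = (0, 0)"
    using HT unfolding HA_topology_def by blast
  define r where "r = rec_nat (SOME j. x j \<notin> Yup 1) (\<lambda>i ri. SOME j. j > ri \<and> x j \<notin> Yup (idx (x ri)))"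
  have r0: "r 0 = (SOME j. x j \<notin> Yup 1)" unfolding r_def by simp
  have rS: "r (Suc i) = (SOME j. j > r i \<and> x j \<notin> Yup (idx (x (r i))))" for i unfolding r_def by simp
  have ex1: "\<exists>j. x j \<notin> Yup 1" using fr by blast
  have exS: "\<exists>j. j > a \<and> x j \<notin> Yup b" for a b using fr[of "Suc a" b] by (auto simp: Suc_le_eq)
  have A0: "x (r 0) \<notin> Yup 1" unfolding r0 using someI_ex[OF ex1] .
  have AS: "r (Suc i) > r i \<and> x (r (Suc i)) \<notin> Yup (idx (x (r i)))" for i
    unfolding rS using someI_ex[OF exS] .
  define k where "k i = idx (x (r i))" for i
  have kS: "k (Suc i) > k i" for i
    using not_Yup(2)[OF xh AS[THEN conjunct2]] unfolding k_def by blast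
  have smr: "strict_mono r" using AS by (intro strict_monoI_Suc) auto
  have smk: "strict_mono k" using kS by (intro strict_monoI_Suc) auto
  have notY: "x (r i) \<notin> Yup 1" for i
  proof (induction i)
    case 0 then show ?case using A0 by simp
  next
    case (Suc i')
    have "idx (x (r i')) \<ge> 1" using not_Yup(3)[OF xh Suc.IH] .
    then show ?case using AS[of i'] Yup_mono[of 1 "idx (x (r i'))"] by auto
  qed
  have k1: "k i \<ge> 1" for i using not_Yup(3)[OF xh notY] k_def by simp
  have kint: "x (r i) \<in> interior (Ann (k i))" for i
    using not_Yup(5)[OF xh notY] k_def by simp
  have injk: "inj k" using smk strict_mono_imp_inj_on by blast
  define y where "y m = (if \<exists>i. k i = Suc m then x (r (THE i. k i = Suc m)) else z m)" for m
  have yk: "y (k i - 1) = x (r i)" for i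
  proof -
    have e: "k i = Suc (k i - 1)" using k1[of i] by simp
    have "(THE i'. k i' = Suc (k i - 1)) = i"
      using injk e by (intro the_equality) (auto dest: injD)
    then show ?thesis unfolding y_def using e by (metis (mono_tags))
  qed
  have yint: "\<forall>m. y m \<in> interior (Ann (Suc m))"
  proof
    fix m show "y m \<in> interior (Ann (Suc m))"
    proof (cases "\<exists>i. k i = Suc m")
      case True
      then obtain i where i: "k i = Suc m" by auto
      then have "m = k i - 1" by simp
      then show ?thesis using yk[of i] kint[of i] i by simp
    next
      case False then show ?thesis unfolding y_def using z by simp
    qed
  qed
  have sms: "strict_mono (\<lambda>i. k i - 1)"
  proof (rule strict_monoI)
    fix a b :: nat assume "a < b"
    then have "k a < k b" using smk strict_mono_less by blast
    then show "k a - 1 < k b - 1" using k1[of a] by linarith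
  qed
  have "y \<circ> (\<lambda>i. k i - 1) = x \<circ> r" using yk by auto
  then have "limitin T (y \<circ> (\<lambda>i. k i - 1)) p sequentially"
    using limitin_subsequence[OF smr lim] by simp
  then have "subseq_limit T y p" unfolding subseq_limit_def using sms by blast
  then show ?thesis using c2 yint by (simp add: zero_prod_def)
qed

end


context hat
begin

lemma cont_HA: "continuous_map (top_of_set {0..1::real}) T g \<Longrightarrow> t \<in> {0..1} \<Longrightarrow> g t \<in> HA"
  using continuous_map_image_subset_topspace topT by fastforce

lemma local_Yup:
  fixes g :: "real \<Rightarrow> real \<times> real"
  assumes g: "continuous_map (top_of_set {0..1}) T g" and t: "t \<in> {0..1}" and nz: "g t \<noteq> 0"
  shows "\<exists>n\<ge>1. \<exists>d>0. \<forall>t'\<in>{0..1}. dist t' t < d \<longrightarrow> g t' \<in> Yup n"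
proof (rule ccontr)
  assume "\<not> ?thesis"
  then have nn: "\<forall>n\<ge>1. \<forall>d>0. \<exists>t'\<in>{0..1}. dist t' t < d \<and> g t' \<notin> Yup n" by auto
  have ex: "\<exists>t'. t' \<in> {0..1} \<and> dist t' t < 1 / (real j + 1) \<and> g t' \<notin> Yup (Suc j)" for j
  proof -
    have "(1::real) / (real j + 1) > 0" by simp
    then show ?thesis using nn[rule_format, of "Suc j" "1 / (real j + 1)"] by auto
  qed
  define tt where "tt j = (SOME t'. t' \<in> {0..1} \<and> dist t' t < 1 / (real j + 1) \<and> g t' \<notin> Yup (Suc j))" for j
  have tt: "tt j \<in> {0..1}" "dist (tt j) t < 1 / (real j + 1)" "g (tt j) \<notin> Yup (Suc j)" for j
    using someI_ex[OF ex[of j]] unfolding tt_def by auto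
  have "tt \<longlonglongrightarrow> t"
  proof (rule LIMSEQ_I)
    fix e :: real assume e: "e > 0"
    obtain N :: nat where N: "1 / e < real N" using reals_Archimedean2 by blast
    show "\<exists>no. \<forall>n\<ge>no. norm (tt n - t) < e"
    proof (intro exI allI impI)
      fix n assume "N \<le> n"
      then have "1 / e < real n + 1" using N by linarith
      then have "1 / (real n + 1) < e" using e by (simp add: field_simps)
      then show "norm (tt n - t) < e" using tt(2)[of n] by (simp add: dist_norm)
    qed
  qed
  then have "limitin (top_of_set {0..1}) tt t sequentially"
    using tt(1) t by (simp add: limitin_subtopology)
  then have lim: "limitin T (g \<circ> tt) (g t) sequentially"
    by (rule continuous_map_limit[OF g])
  have "g t = 0"
  proof (rule escape[OF lim])
    show "(g \<circ> tt) j \<in> HA" for j using cont_HA[OF g tt(1)] by simp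
    show "\<exists>j\<ge>j0. (g \<circ> tt) j \<notin> Yup n" for n j0
    proof (intro exI conjI)
      show "max j0 n \<ge> j0" by simp
      have "Yup n \<subseteq> Yup (Suc (max j0 n))" by (rule Yup_mono) simp
      then show "(g \<circ> tt) (max j0 n) \<notin> Yup n" using tt(3)[of "max j0 n"] by auto
    qed
  qed
  then show False using nz by simp
qed

lemma H_cont:
  fixes g :: "real \<Rightarrow> real \<times> real"
  assumes g: "continuous_map (top_of_set {0..1}) T g" and N: "N \<ge> 1"
  shows "continuous_map (top_of_set ({0..1} \<times> {0..1})) T (\<lambda>p. Phi N (fst p) (g (snd p)))"
proof -
  define S :: "(real \<times> real) set" where "S = {0..1} \<times> {0..1}"
  define F where "F = (\<lambda>p::real \<times> real. Phi N (fst p) (g (snd p)))"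
  have snd_c: "continuous_map (top_of_set S) (top_of_set {0..1}) snd"
    unfolding S_def by (auto intro: continuous_intros)
  have gs: "continuous_map (top_of_set S) T (\<lambda>p. g (snd p))"
    using continuous_map_compose[OF snd_c g] by (simp add: o_def)
  have img: "F ` S \<subseteq> topspace T"
  proof
    fix y assume "y \<in> F ` S"
    then obtain q where q: "q \<in> S" "y = F q" by auto
    then have a: "g (snd q) \<in> HA" using cont_HA[OF g] unfolding S_def by auto
    have b: "0 \<le> fst q" "fst q \<le> 1" using q unfolding S_def by auto
    show "y \<in> topspace T" using q Phi_HA[OF a b N] topT unfolding F_def by auto
  qed
  have opn: "openin (top_of_set S) {x \<in> S. F x \<in> U}" if U: "openin T U" for U
  proof (subst openin_subopen, intro ballI)
    fix p assume p: "p \<in> {x \<in> S. F x \<in> U}"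
    then have pS: "p \<in> S" and pU: "F p \<in> U" by auto
    have gp: "g (snd p) \<in> HA" using cont_HA[OF g] pS unfolding S_def by auto
    show "\<exists>Q. openin (top_of_set S) Q \<and> p \<in> Q \<and> Q \<subseteq> {x \<in> S. F x \<in> U}"
    proof (cases "g (snd p) = 0")
      case True
      then have U0: "0 \<in> U" using pU unfolding F_def by simp
      have "openin (subtopology T (Yup N)) (U \<inter> Yup N)" using U by (rule openin_subtopology_Int)
      then have "openin (top_of_set (Yup N)) (U \<inter> Yup N)" using subT[OF N] by simp
      then obtain r where r: "r > 0" "ball 0 r \<inter> Yup N \<subseteq> U \<inter> Yup N"
        using U0 zero_Yup unfolding openin_contains_ball by blast
      define C where "C = Yup N - ball 0 r"
      have "closedin (top_of_set (Yup N)) C" unfolding C_def closedin_closed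
        by (intro exI[of _ "- ball 0 r"]) auto
      then have "closedin (subtopology T (Yup N)) C" using subT[OF N] by simp
      then have cC: "closedin T C" using Yup_closedin[OF N] by (rule closedin_trans_full)
      define W where "W = U \<inter> (topspace T - C)"
      have oW: "openin T W" unfolding W_def using U cC by auto
      define Q where "Q = {x \<in> S. g (snd x) \<in> W}"
      have oQ: "openin (top_of_set S) Q"
        using openin_continuous_map_preimage[OF gs oW] unfolding Q_def by simp
      have pQ: "p \<in> Q" unfolding Q_def W_def C_def using pS True U0 r(1) zero_Yup topT by auto
      have "Q \<subseteq> {x \<in> S. F x \<in> U}"
      proof
        fix q assume q: "q \<in> Q"
        then have qS: "q \<in> S" and zW: "g (snd q) \<in> W" unfolding Q_def by auto
        define z where "z = g (snd q)"
        have s01: "0 \<le> fst q" "fst q \<le> 1" using qS unfolding S_def by auto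
        have zH: "z \<in> HA" using zW topT unfolding z_def W_def by auto
        have "F q \<in> U"
        proof (cases "z = 0 \<or> real N + 1 \<le> rho z")
          case True
          then have "F q = z" unfolding F_def z_def using Phi_id s01 by auto
          then show ?thesis using zW unfolding W_def z_def by auto
        next
          case False
          then have z0: "z \<noteq> 0" and lt: "rho z < real N + 1" by auto
          have "1 \<le> rho z" using zH z0 HA_char by auto
          then have zY: "z \<in> Yup N" using lt N unfolding Yup_char by auto
          then have zb: "z \<in> ball 0 r" using zW unfolding z_def W_def C_def by auto
          have "Phi N (fst q) z \<in> Yup N" using Phi_Yup[OF zY s01 N] by simp
          moreover have "norm (Phi N (fst q) z) \<le> norm z" using Phi_norm[OF zH s01] .
          ultimately have "Phi N (fst q) z \<in> ball 0 r \<inter> Yup N" using zb by auto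
          then show ?thesis using r(2) unfolding F_def z_def by auto
        qed
        then show "q \<in> {x \<in> S. F x \<in> U}" using qS by auto
      qed
      then show ?thesis using oQ pQ by blast
    next
      case False
      obtain n d where nd: "n \<ge> 1" "d > 0" "\<And>t'. t' \<in> {0..1} \<Longrightarrow> dist t' (snd p) < d \<Longrightarrow> g t' \<in> Yup n"
        using local_Yup[OF g _ False] pS unfolding S_def by auto
      define m where "m = max n N"
      have m1: "m \<ge> 1" using N unfolding m_def by simp
      define P where "P = S \<inter> {q. dist (snd q) (snd p) < d}"
      have oP: "openin (top_of_set S) P" unfolding P_def
        by (intro openin_open_Int open_Collect_less continuous_intros)
      define I where "I = {0..1} \<inter> {t. dist t (snd p) < d}"
      have "continuous_map (subtopology (top_of_set {0..1}) I) T g"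
        using g by (rule continuous_map_from_subtopology)
      then have "continuous_map (top_of_set I) T g" unfolding I_def by (simp add: subtopology_subtopology)
      moreover have "g \<in> topspace (top_of_set I) \<rightarrow> Yup n" using nd(3) unfolding I_def by auto
      ultimately have "continuous_map (top_of_set I) (subtopology T (Yup n)) g"
        by (simp add: continuous_map_in_subtopology)
      then have gI: "continuous_on I g" using subT[OF nd(1)] by simp
      have c1: "continuous_on P (\<lambda>q. (fst q, g (snd q)))"
      proof (intro continuous_on_Pair continuous_on_fst continuous_on_id)
        show "continuous_on P (\<lambda>x. g (snd x))"
          by (rule continuous_on_compose2[OF gI continuous_on_snd]) (auto simp: P_def I_def S_def)
      qed
      have "continuous_on P F"
        unfolding F_def
        by (rule continuous_on_compose2[OF Phi_cont c1, simplified])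
          (use cont_HA[OF g] in \<open>auto simp: P_def S_def\<close>)
      moreover have "F \<in> P \<rightarrow> Yup m"
      proof
        fix q assume q: "q \<in> P"
        then have "g (snd q) \<in> Yup n" using nd(3) unfolding P_def S_def by auto
        moreover have "0 \<le> fst q" "fst q \<le> 1" using q unfolding P_def S_def by auto
        ultimately show "F q \<in> Yup m" unfolding F_def m_def using Phi_Yup[OF _ _ _ N] by auto
      qed
      ultimately have "continuous_map (top_of_set P) (top_of_set (Yup m)) F" by simp
      then have "continuous_map (top_of_set P) (subtopology T (Yup m)) F" using subT[OF m1] by simp
      then have FP: "continuous_map (top_of_set P) T F" using continuous_map_in_subtopology by blast
      have "openin (top_of_set P) {x \<in> P. F x \<in> U}"
        using openin_continuous_map_preimage[OF FP U] by simp
      then have oQ: "openin (top_of_set S) {x \<in> P. F x \<in> U}" using oP by (rule openin_trans)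
      have "p \<in> {x \<in> P. F x \<in> U}" using pS pU nd(2) unfolding P_def by auto
      moreover have "{x \<in> P. F x \<in> U} \<subseteq> {x \<in> S. F x \<in> U}" unfolding P_def by auto
      ultimately show ?thesis using oQ by blast
    qed
  qed
  show ?thesis unfolding S_def[symmetric] F_def[symmetric] continuous_map
    using img opn by auto
qed

lemma shrink:
  fixes g :: "real \<Rightarrow> real \<times> real"
  assumes g: "continuous_map (top_of_set {0..1}) T g" and V: "openin T V" and V0: "0 \<in> V"
  shows "\<exists>N\<ge>1. \<forall>t\<in>{0..1}. Phi N 1 (g t) \<in> V"
proof -
  have "openin (subtopology T (Yup 1)) (V \<inter> Yup 1)" using V by (rule openin_subtopology_Int)
  then have "openin (top_of_set (Yup 1)) (V \<inter> Yup 1)" using subT[of 1] by simp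
  then obtain r where r: "r > 0" "ball 0 r \<inter> Yup 1 \<subseteq> V \<inter> Yup 1"
    using V0 zero_Yup unfolding openin_contains_ball by blast
  have "\<exists>N0. \<forall>t\<in>{0..1}. g t \<notin> V \<longrightarrow> g t \<in> Yup N0"
  proof (rule ccontr)
    assume "\<not> ?thesis"
    then have ex0: "\<forall>N0. \<exists>t\<in>{0..1}. g t \<notin> V \<and> g t \<notin> Yup N0" by auto
    have ex: "\<exists>t. t \<in> {0..1} \<and> g t \<notin> V \<and> g t \<notin> Yup n" for n
      using ex0[rule_format, of n] by blast
    define tt where "tt n = (SOME t. t \<in> {0..1} \<and> g t \<notin> V \<and> g t \<notin> Yup n)" for n
    have tt: "tt n \<in> {0..1}" "g (tt n) \<notin> V" "g (tt n) \<notin> Yup n" for n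
      using someI_ex[OF ex[of n]] unfolding tt_def by auto
    define C where "C = {t \<in> {0..1::real}. g t \<notin> V}"
    have "openin (top_of_set {0..1}) {t \<in> {0..1::real}. g t \<in> V}"
      using openin_continuous_map_preimage[OF g V] by simp
    then have "closedin (top_of_set {0..1}) ({0..1} - {t \<in> {0..1::real}. g t \<in> V})"
      by (intro closedin_diff) auto
    moreover have "{0..1} - {t \<in> {0..1::real}. g t \<in> V} = C" unfolding C_def by auto
    ultimately have "closed C" using closedin_closed_trans by auto
    moreover have "bounded C" unfolding C_def by (rule bounded_subset[OF bounded_closed_interval]) auto
    ultimately have "compact C" using compact_eq_bounded_closed by blast
    then have "seq_compact C" by (rule compact_imp_seq_compact)
    moreover have "\<forall>n. tt n \<in> C" using tt unfolding C_def by auto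
    ultimately obtain t rr where t: "t \<in> C" and rr: "strict_mono rr" "(tt \<circ> rr) \<longlonglongrightarrow> t"
      unfolding seq_compact_def by blast
    have "limitin (top_of_set {0..1}) (tt \<circ> rr) t sequentially"
      using rr(2) tt(1) t unfolding C_def by (simp add: limitin_subtopology)
    then have lim: "limitin T (g \<circ> (tt \<circ> rr)) (g t) sequentially"
      by (rule continuous_map_limit[OF g])
    have "g t = 0"
    proof (rule escape[OF lim])
      show "(g \<circ> (tt \<circ> rr)) j \<in> HA" for j using cont_HA[OF g tt(1)] by simp
      show "\<exists>j\<ge>j0. (g \<circ> (tt \<circ> rr)) j \<notin> Yup n" for n j0
      proof (intro exI conjI)
        show "max j0 n \<ge> j0" by simp
        have "n \<le> rr (max j0 n)" using seq_suble[OF rr(1), of "max j0 n"] by simp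
        then have "Yup n \<subseteq> Yup (rr (max j0 n))" by (rule Yup_mono)
        then show "(g \<circ> (tt \<circ> rr)) (max j0 n) \<notin> Yup n" using tt(3)[of "rr (max j0 n)"] by auto
      qed
    qed
    then show False using t V0 unfolding C_def by simp
  qed
  then obtain N0 where N0: "\<And>t. t \<in> {0..1} \<Longrightarrow> g t \<notin> V \<Longrightarrow> g t \<in> Yup N0" by blast
  obtain N1 :: nat where N1: "2 / r < real N1" using reals_Archimedean2 by blast
  define N where "N = max (max N0 1) N1"
  have N: "N \<ge> 1" "N0 \<le> N" unfolding N_def by auto
  have "2 / r < real N + 1" using N1 unfolding N_def by linarith
  then have Nr: "2 / (real N + 1) < r" using r(1) by (simp add: field_simps)
  have XV: "Xc m \<subseteq> V" if m: "m \<ge> N + 1" for m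
  proof
    fix z assume z: "z \<in> Xc m"
    have m1: "m \<ge> 1" using m by simp
    have "norm z \<le> 2 / real m" using Xc_small[OF m1 z] .
    also have "\<dots> \<le> 2 / (real N + 1)" using m by (intro divide_left_mono) auto
    finally have "z \<in> ball 0 r" using Nr by simp
    moreover have "z \<in> Yup 1" using Xc_Y1[OF m1] Y1_Yup z by blast
    ultimately show "z \<in> V" using r(2) by auto
  qed
  have "\<forall>t\<in>{0..1}. Phi N 1 (g t) \<in> V"
  proof
    fix t :: real assume t: "t \<in> {0..1}"
    define z where "z = g t"
    have zH: "z \<in> HA" using cont_HA[OF g t] unfolding z_def .
    show "Phi N 1 (g t) \<in> V"
    proof (cases "z = 0 \<or> real N + 1 \<le> rho z")
      case True
      then have e: "Phi N 1 z = z" using Phi_id by auto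
      show ?thesis
      proof (rule ccontr)
        assume nv: "Phi N 1 (g t) \<notin> V"
        then have zV: "z \<notin> V" using e unfolding z_def by simp
        then have "z \<in> Yup N0" using N0[OF t] unfolding z_def by simp
        then have zY: "z \<in> Yup N" using Yup_mono[OF N(2)] by auto
        have z0: "z \<noteq> 0" using zV V0 by auto
        then have rN: "real N + 1 \<le> rho z" using True by simp
        obtain m where m: "m \<ge> N + 1" "rho z = real m"
        proof (cases "\<exists>m\<ge>1. rho z = real m")
          case True
          then obtain m where "m \<ge> 1" "rho z = real m" by auto
          then show ?thesis using rN that by (metis of_nat_1 of_nat_add of_nat_le_iff)
        next
          case False
          then have "rho z \<le> real N + 1" using zY z0 unfolding Yup_char by auto
          then have "rho z = real (N + 1)" using rN by simp
          then show ?thesis using that[of "N+1"] by blast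
        qed
        then have "z \<in> Xc m" using sphere_hc[of m z] z0 by simp
        then show False using XV[OF m(1)] zV by auto
      qed
    next
      case False
      then have z0: "z \<noteq> 0" and lt: "rho z < real N + 1" by auto
      have "1 \<le> rho z" using zH z0 HA_char by auto
      then have "Phi N 1 z \<in> Xc (N + 1)" using Phi_1[OF z0 _ lt] by simp
      then show ?thesis using XV[of "N+1"] unfolding z_def by auto
    qed
  qed
  then show ?thesis using N(1) by blast
qed

end


lemma cont_comp_real:
  fixes \<phi> :: "'a::topological_space \<Rightarrow> 'b" and a :: "'c::topological_space \<Rightarrow> 'a"
  assumes "continuous_map (top_of_set B) X \<phi>" "continuous_on A a" "a ` A \<subseteq> B"
  shows "continuous_map (top_of_set A) X (\<lambda>x. \<phi> (a x))"
proof -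
  have a: "continuous_map (top_of_set A) (top_of_set B) a" using assms(2,3) by (auto simp: image_subset_iff)
  from continuous_map_compose[OF a assms(1)] show ?thesis by (simp add: o_def)
qed

lemma loops_restrict:
  fixes \<phi> :: "real \<Rightarrow> real \<times> real"
  assumes "continuous_map (top_of_set {0..1}) X \<phi>" "\<phi> 0 = 0" "\<phi> 1 = 0"
  shows "restrict \<phi> {0..1} \<in> loops X"
proof -
  have "continuous_map (top_of_set {0..1}) X (restrict \<phi> {0..1})"
    by (rule continuous_map_eq[OF assms(1)]) auto
  then show ?thesis unfolding loops_def using assms by (auto simp: zero_prod_def)
qed

lemma loops_cont: "f \<in> loops X \<Longrightarrow> continuous_map (top_of_set {0..1}) X f"
  and loops_0: "f \<in> loops X \<Longrightarrow> f 0 = 0"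
  and loops_1: "f \<in> loops X \<Longrightarrow> f 1 = 0"
  and loops_ext: "f \<in> loops X \<Longrightarrow> f \<in> extensional {0..1}"
  unfolding loops_def by (auto simp: zero_prod_def)

lemma topspace_col: "topspace (compact_open_loops X) = loops X"
proof -
  have "loops X \<in> {{f \<in> loops X. f ` K \<subseteq> U} | K U. K \<subseteq> {0..1} \<and> compact K \<and> openin X U}"
    by (rule CollectI, intro exI[of _ "{}"] exI[of _ "{}"]) auto
  then show ?thesis unfolding compact_open_loops_def topology_generated_by_topspace by auto
qed

lemma homotopy_path:
  fixes K :: "real \<times> real \<Rightarrow> real \<times> real"
  assumes K: "continuous_map (top_of_set ({0..1} \<times> {0..1})) X K"
    and K0: "\<And>s. s \<in> {0..1} \<Longrightarrow> K (s, 0) = 0" and K1: "\<And>s. s \<in> {0..1} \<Longrightarrow> K (s, 1) = 0"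
  shows "path_component_of (compact_open_loops X) (restrict (\<lambda>t. K (0, t)) {0..1}) (restrict (\<lambda>t. K (1, t)) {0..1})"
proof -
  define p where "p s = restrict (\<lambda>t. K (s, t)) {0..1}" for s
  have ploop: "p s \<in> loops X" if s: "s \<in> {0..1}" for s
  proof -
    have "continuous_map (top_of_set {0..1}) X (\<lambda>t. K (s, t))"
      by (rule cont_comp_real[OF K]) (use s in \<open>auto intro: continuous_intros\<close>)
    then show ?thesis unfolding p_def using loops_restrict K0 K1 s by blast
  qed
  define S where "S = {{f \<in> loops X. f ` Kc \<subseteq> U} | Kc U. Kc \<subseteq> {0..1} \<and> compact Kc \<and> openin X U}"
  have "continuous_map (top_of_set {0..1}) (topology_generated_by S) p"
  proof (rule continuous_on_generated_topo)
    show "p ` topspace (top_of_set {0..1}) \<subseteq> \<Union> S"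
      using ploop topspace_col[of X] unfolding compact_open_loops_def S_def by auto
    fix W assume "W \<in> S"
    then obtain Kc U where W: "W = {f \<in> loops X. f ` Kc \<subseteq> U}" and Kc: "Kc \<subseteq> {0..1}" "compact Kc"
      and U: "openin X U" unfolding S_def by auto
    have im: "p s ` Kc = (\<lambda>t. K (s, t)) ` Kc" for s using Kc(1) unfolding p_def by auto
    have eq: "p -` W \<inter> topspace (top_of_set {0..1}) = {s \<in> {0..1}. \<forall>t\<in>Kc. K (s, t) \<in> U}"
      using ploop unfolding W by (auto simp: im)
    have "openin (top_of_set {0..1}) {s \<in> {0..1}. \<forall>t\<in>Kc. K (s, t) \<in> U}"
    proof (subst openin_subopen, intro ballI)
      fix s0 assume s0: "s0 \<in> {s \<in> {0..1}. \<forall>t\<in>Kc. K (s, t) \<in> U}"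
      have "openin (top_of_set ({0..1} \<times> {0..1})) {x \<in> {0..1} \<times> {0..1}. K x \<in> U}"
        using openin_continuous_map_preimage[OF K U] by simp
      then obtain Oo where O: "open Oo" "{x \<in> {0..1} \<times> {0..1}. K x \<in> U} = ({0..1} \<times> {0..1}) \<inter> Oo"
        unfolding openin_open by auto
      have cK: "compact ({s0} \<times> Kc)" using Kc(2) by (intro compact_Times) auto
      have sub: "{s0} \<times> Kc \<inter> - Oo = {}" using s0 O(2) Kc(1) by auto
      obtain d where d: "d > 0" "\<And>x y. x \<in> {s0} \<times> Kc \<Longrightarrow> y \<in> - Oo \<Longrightarrow> d \<le> dist x y"
        using separate_compact_closed[OF cK _ sub] O(1) by (auto simp: closed_Compl)
      define Q where "Q = {0..1} \<inter> ball s0 d"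
      have "openin (top_of_set {0..1}) Q" unfolding Q_def by (intro openin_open_Int) auto
      moreover have "s0 \<in> Q" using s0 d(1) unfolding Q_def by auto
      moreover have "Q \<subseteq> {s \<in> {0..1}. \<forall>t\<in>Kc. K (s, t) \<in> U}"
      proof
        fix s assume s: "s \<in> Q"
        have "K (s, t) \<in> U" if t: "t \<in> Kc" for t
        proof -
          have "dist (s0, t) (s, t) < d" using s unfolding Q_def by (simp add: dist_Pair_Pair)
          then have "(s, t) \<in> Oo" using d(2)[of "(s0, t)" "(s, t)"] t by force
          then show ?thesis using O(2) s t Kc(1) unfolding Q_def by blast
        qed
        then show "s \<in> {s \<in> {0..1}. \<forall>t\<in>Kc. K (s, t) \<in> U}" using s unfolding Q_def by auto
      qed
      ultimately show "\<exists>Q. openin (top_of_set {0..1}) Q \<and> s0 \<in> Q \<and> Q \<subseteq> {s \<in> {0..1}. \<forall>t\<in>Kc. K (s, t) \<in> U}"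
        by blast
    qed
    then show "openin (top_of_set {0..1}) (p -` W \<inter> topspace (top_of_set {0..1}))" using eq by simp
  qed
  then have "pathin (compact_open_loops X) p"
    unfolding pathin_def compact_open_loops_def S_def by simp
  then show ?thesis unfolding path_component_of_def p_def by auto
qed


lemma paste_real:
  fixes h :: "'a::topological_space \<Rightarrow> real"
  assumes "continuous_map (top_of_set {x\<in>A. h x \<le> c}) X f"
    "continuous_map (top_of_set {x\<in>A. c \<le> h x}) X g"
    "continuous_on A h" "\<And>x. x \<in> A \<Longrightarrow> h x = c \<Longrightarrow> f x = g x"
  shows "continuous_map (top_of_set A) X (\<lambda>x. if h x \<le> c then f x else g x)"
proof (rule continuous_map_cases_le)
  show "continuous_map (top_of_set A) euclideanreal h" using assms(3) by simp
  show "continuous_map (top_of_set A) euclideanreal (\<lambda>x. c)" by simp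
  have e1: "subtopology (top_of_set A) {x \<in> topspace (top_of_set A). h x \<le> c} = top_of_set {x\<in>A. h x \<le> c}"
    by (simp add: subtopology_subtopology Int_def)
  show "continuous_map (subtopology (top_of_set A) {x \<in> topspace (top_of_set A). h x \<le> c}) X f"
    unfolding e1 by (rule assms(1))
  have e2: "subtopology (top_of_set A) {x \<in> topspace (top_of_set A). c \<le> h x} = top_of_set {x\<in>A. c \<le> h x}"
    by (simp add: subtopology_subtopology Int_def)
  show "continuous_map (subtopology (top_of_set A) {x \<in> topspace (top_of_set A). c \<le> h x}) X g"
    unfolding e2 by (rule assms(2))
  show "\<And>x. x \<in> topspace (top_of_set A) \<Longrightarrow> h x = c \<Longrightarrow> f x = g x" using assms(4) by simp
qed

definition ins :: "(real \<Rightarrow> real \<times> real) \<Rightarrow> (real \<Rightarrow> real \<times> real) \<Rightarrow> real \<Rightarrow> real \<Rightarrow> real \<times> real" where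
  "ins l f e = restrict (\<lambda>t. if t \<le> e then l (t / e) else f ((t - e) / (1 - e))) {0..1}"

lemma ins_cont:
  fixes l f :: "real \<Rightarrow> 'b" and e :: real
  assumes l: "continuous_map (top_of_set {0..1}) X l" and f: "continuous_map (top_of_set {0..1}) X f"
    and lf: "l 1 = f 0" and e: "0 < e" "e < 1"
  shows "continuous_map (top_of_set {0..1}) X (\<lambda>t. if t \<le> e then l (t / e) else f ((t - e) / (1 - e)))"
proof (rule paste_real[where h = "\<lambda>t. t" and c = e and f = "\<lambda>t. l (t / e)" and g = "\<lambda>t. f ((t - e) / (1 - e))"])
  show "continuous_map (top_of_set {x \<in> {0..1}. x \<le> e}) X (\<lambda>t. l (t / e))"
    by (rule cont_comp_real[OF l]) (use e in \<open>auto intro!: continuous_intros simp: field_simps\<close>)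
  show "continuous_map (top_of_set {x \<in> {0..1}. e \<le> x}) X (\<lambda>t. f ((t - e) / (1 - e)))"
    by (rule cont_comp_real[OF f]) (use e in \<open>auto intro!: continuous_intros simp: field_simps\<close>)
  show "continuous_on {0..1} (\<lambda>t. t)" by (rule continuous_on_id)
  show "\<And>x. x \<in> {0..1} \<Longrightarrow> x = e \<Longrightarrow> l (x / e) = f ((x - e) / (1 - e))" using lf e by simp
qed

lemma ins_loop:
  assumes l: "l \<in> loops X" and f: "f \<in> loops X" and e: "0 < e" "e < 1"
  shows "ins l f e \<in> loops X"
  unfolding ins_def
proof (rule loops_restrict)
  show "continuous_map (top_of_set {0..1}) X (\<lambda>t. if t \<le> e then l (t / e) else f ((t - e) / (1 - e)))"
    using ins_cont[OF loops_cont[OF l] loops_cont[OF f] _ e] loops_0[OF f] loops_1[OF l] by simp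
  show "(if (0::real) \<le> e then l (0 / e) else f ((0 - e) / (1 - e))) = 0" using e loops_0[OF l] by simp
  show "(if (1::real) \<le> e then l (1 / e) else f ((1 - e) / (1 - e))) = 0" using e loops_1[OF f] by simp
qed

definition Qp :: "(real \<times> real) topology \<Rightarrow> (real \<Rightarrow> real \<times> real) set \<Rightarrow> bool" where
  "Qp X Os \<longleftrightarrow> (\<forall>f\<in>Os. \<exists>V e0. openin X V \<and> 0 \<in> V \<and> 0 < e0 \<and>
      (\<forall>e l. 0 < e \<and> e < e0 \<and> l \<in> loops X \<and> l ` {0..1} \<subseteq> V \<longrightarrow> ins l f e \<in> Os))"

lemma Qp_basis:
  assumes Kc: "Kc \<subseteq> {0..1}" "compact Kc" and U: "openin X U"
  shows "Qp X {f \<in> loops X. f ` Kc \<subseteq> U}"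
  unfolding Qp_def
proof
  fix f assume f: "f \<in> {f \<in> loops X. f ` Kc \<subseteq> U}"
  then have fl: "f \<in> loops X" and fK: "f ` Kc \<subseteq> U" by auto
  define D where "D = {t \<in> {0..1::real}. f t \<in> U}"
  have "openin (top_of_set {0..1}) D"
    using openin_continuous_map_preimage[OF loops_cont[OF fl] U] unfolding D_def by simp
  then have "closedin (top_of_set {0..1}) ({0..1} - D)" by (intro closedin_diff) auto
  then have cC: "closed ({0..1} - D)" using closedin_closed_trans by auto
  have dis: "Kc \<inter> ({0..1} - D) = {}" using Kc(1) fK unfolding D_def by auto
  obtain \<delta> where \<delta>: "\<delta> > 0" "\<And>x y. x \<in> Kc \<Longrightarrow> y \<in> {0..1} - D \<Longrightarrow> \<delta> \<le> dist x y"
    using separate_compact_closed[OF Kc(2) cC dis] by auto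
  have claim: "ins l f e \<in> {f \<in> loops X. f ` Kc \<subseteq> U}"
    if e: "0 < e" "e \<le> 1/2" "2 * e < \<delta>" and l: "l \<in> loops X"
      and lK: "\<And>t. t \<in> Kc \<Longrightarrow> t \<le> e \<Longrightarrow> l (t / e) \<in> U" for e l
  proof -
    have il: "ins l f e \<in> loops X" using ins_loop[OF l fl] e by simp
    have "ins l f e t \<in> U" if t: "t \<in> Kc" for t
    proof (cases "t \<le> e")
      case True
      then show ?thesis using lK[OF t True] t Kc(1) unfolding ins_def by auto
    next
      case False
      have t01: "0 \<le> t" "t \<le> 1" using t Kc(1) by auto
      define t' where "t' = (t - e) / (1 - e)"
      have t'01: "0 \<le> t'" "t' \<le> 1" using False e t01 unfolding t'_def by (auto simp: field_simps)
      have "t - t' = e * (1 - t) / (1 - e)" using e unfolding t'_def by (simp add: field_simps)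
      moreover have "e * (1 - t) / (1 - e) \<le> 2 * e"
      proof -
        have "1 - t \<le> 2 * (1 - e)" using e t01 by (simp add: algebra_simps)
        then have "e * (1 - t) \<le> e * (2 * (1 - e))" by (rule mult_left_mono) (use e in auto)
        then have "e * (1 - t) / (1 - e) \<le> e * (2 * (1 - e)) / (1 - e)"
          by (rule divide_right_mono) (use e in auto)
        also have "\<dots> = 2 * e" using e by (simp add: field_simps)
        finally show ?thesis .
      qed
      moreover have "e * (1 - t) / (1 - e) \<ge> 0" using e t01 by auto
      ultimately have "t' \<le> t" "t - t' \<le> 2 * e" by auto
      then have "dist t t' < \<delta>" using e by (simp add: dist_real_def)
      then have "t' \<in> D" using \<delta>(2)[OF t, of t'] t'01 by force
      then show ?thesis using False t01 unfolding ins_def D_def t'_def by auto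
    qed
    then show ?thesis using il by auto
  qed
  have "f 0 \<in> topspace X" using continuous_map_image_subset_topspace[OF loops_cont[OF fl]] by auto
  then have f0U: "0 \<in> topspace X" using loops_0[OF fl] by simp
  show "\<exists>V e0. openin X V \<and> 0 \<in> V \<and> 0 < e0 \<and>
      (\<forall>e l. 0 < e \<and> e < e0 \<and> l \<in> loops X \<and> l ` {0..1} \<subseteq> V \<longrightarrow> ins l f e \<in> {f \<in> loops X. f ` Kc \<subseteq> U})"
  proof (cases "0 \<in> Kc")
    case True
    have "0 \<in> U" using fK True loops_0[OF fl] by force
    moreover
    have insK: "ins l f e \<in> {f \<in> loops X. f ` Kc \<subseteq> U}"
      if "0 < e" "e < min (\<delta>/2) (1/2)" "l \<in> loops X" "l ` {0..1} \<subseteq> U" for e l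
    proof (rule claim)
      show "0 < e" "e \<le> 1/2" "2 * e < \<delta>" "l \<in> loops X" using that by auto
      fix t assume "t \<in> Kc" "t \<le> e"
      then have "t / e \<in> {0..1}" using Kc(1) that(1) by auto
      then show "l (t / e) \<in> U" using that(4) by auto
    qed
    ultimately have B: "openin X U \<and> 0 \<in> U \<and> 0 < min (\<delta>/2) (1/2) \<and> (\<forall>e l. 0 < e \<and> e < min (\<delta>/2) (1/2) \<and> l \<in> loops X \<and> l ` {0..1} \<subseteq> U
       \<longrightarrow> ins l f e \<in> {f \<in> loops X. f ` Kc \<subseteq> U})"
    proof (intro conjI allI impI)
      show "openin X U" by (rule U)
      show "0 < min (\<delta>/2) (1/2)" using \<delta>(1) by simp
      fix e l assume "0 < e \<and> e < min (\<delta>/2) (1/2) \<and> l \<in> loops X \<and> l ` {0..1} \<subseteq> U"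
      then show "ins l f e \<in> {f \<in> loops X. f ` Kc \<subseteq> U}" using insK by (elim conjE)
    qed
    show ?thesis by (rule exI[of _ U], rule exI[of _ "min (\<delta>/2) (1/2)"], rule B)
  next
    case False
    have "compact {0::real}" by simp
    moreover have "closed Kc" using Kc(2) by (rule compact_imp_closed)
    moreover have "{0::real} \<inter> Kc = {}" using False by auto
    ultimately obtain \<delta>0 where \<delta>0: "\<delta>0 > 0" "\<And>y. y \<in> Kc \<Longrightarrow> \<delta>0 \<le> dist 0 y"
      using separate_compact_closed[of "{0::real}" Kc] by auto
    have insK: "ins l f e \<in> {f \<in> loops X. f ` Kc \<subseteq> U}"
      if "0 < e" "e < min (min (\<delta>/2) (1/2)) \<delta>0" "l \<in> loops X" for e l
    proof (rule claim)
      show "0 < e" "e \<le> 1/2" "2 * e < \<delta>" "l \<in> loops X" using that by auto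
      fix t assume t: "t \<in> Kc" "t \<le> e"
      have "\<delta>0 \<le> t" using \<delta>0(2)[OF t(1)] t Kc(1) by (auto simp: dist_real_def)
      moreover have "e < \<delta>0" using that(2) by simp
      ultimately show "l (t / e) \<in> U" using t(2) by simp
    qed
    define m where "m = min (min (\<delta>/2) (1/2)) \<delta>0"
    have pos: "0 < m" using \<delta>(1) \<delta>0(1) unfolding m_def by simp
    have A: "\<forall>e l. 0 < e \<and> e < m \<and> l \<in> loops X \<and> l ` {0..1} \<subseteq> topspace X
       \<longrightarrow> ins l f e \<in> {f \<in> loops X. f ` Kc \<subseteq> U}"
    proof (intro allI impI)
      fix e l assume "0 < e \<and> e < m \<and> l \<in> loops X \<and> l ` {0..1} \<subseteq> topspace X"
      then show "ins l f e \<in> {f \<in> loops X. f ` Kc \<subseteq> U}" using insK unfolding m_def by (elim conjE)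
    qed
    have B: "openin X (topspace X) \<and> 0 \<in> topspace X \<and> 0 < m \<and> (\<forall>e l. 0 < e \<and> e < m \<and> l \<in> loops X \<and> l ` {0..1} \<subseteq> topspace X
       \<longrightarrow> ins l f e \<in> {f \<in> loops X. f ` Kc \<subseteq> U})"
      using A f0U pos by (intro conjI openin_topspace)
    show ?thesis by (rule exI[of _ "topspace X"], rule exI[of _ m], rule B)
  qed
qed

lemma open_Qp:
  assumes "openin (compact_open_loops X) Os"
  shows "Qp X Os"
proof -
  have "generate_topology_on {{f \<in> loops X. f ` K \<subseteq> U} | K U. K \<subseteq> {0..1} \<and> compact K \<and> openin X U} Os"
    using assms unfolding compact_open_loops_def openin_topology_generated_by_iff .
  then show ?thesis
  proof (induct rule: generate_topology_on.induct)
    case Empty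
    then show ?case unfolding Qp_def by simp
  next
    case (Int a b)
    show ?case unfolding Qp_def
    proof
      fix f assume fab: "f \<in> a \<inter> b"
      have "f \<in> a" "f \<in> b" using fab by auto
      have "\<exists>V e0. openin X V \<and> 0 \<in> V \<and> 0 < e0 \<and>
          (\<forall>e l. 0 < e \<and> e < e0 \<and> l \<in> loops X \<and> l ` {0..1} \<subseteq> V \<longrightarrow> ins l f e \<in> a)"
        using Int(2) \<open>f \<in> a\<close> unfolding Qp_def by (rule bspec)
      then obtain V1 e1 where A0: "openin X V1 \<and> 0 \<in> V1 \<and> 0 < e1 \<and>
          (\<forall>e l. 0 < e \<and> e < e1 \<and> l \<in> loops X \<and> l ` {0..1} \<subseteq> V1 \<longrightarrow> ins l f e \<in> a)"
        by (elim exE)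
      have "\<exists>V e0. openin X V \<and> 0 \<in> V \<and> 0 < e0 \<and>
          (\<forall>e l. 0 < e \<and> e < e0 \<and> l \<in> loops X \<and> l ` {0..1} \<subseteq> V \<longrightarrow> ins l f e \<in> b)"
        using Int(4) \<open>f \<in> b\<close> unfolding Qp_def by (rule bspec)
      then obtain V2 e2 where B0: "openin X V2 \<and> 0 \<in> V2 \<and> 0 < e2 \<and>
          (\<forall>e l. 0 < e \<and> e < e2 \<and> l \<in> loops X \<and> l ` {0..1} \<subseteq> V2 \<longrightarrow> ins l f e \<in> b)"
        by (elim exE)
      have A: "openin X V1" "0 \<in> V1" "0 < e1"
          "\<And>e l. 0 < e \<and> e < e1 \<and> l \<in> loops X \<and> l ` {0..1} \<subseteq> V1 \<longrightarrow> ins l f e \<in> a"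
        using A0 by auto
      have B: "openin X V2" "0 \<in> V2" "0 < e2"
          "\<And>e l. 0 < e \<and> e < e2 \<and> l \<in> loops X \<and> l ` {0..1} \<subseteq> V2 \<longrightarrow> ins l f e \<in> b"
        using B0 by auto
      have C: "openin X (V1 \<inter> V2) \<and> 0 \<in> V1 \<inter> V2 \<and> 0 < min e1 e2 \<and>
          (\<forall>e l. 0 < e \<and> e < min e1 e2 \<and> l \<in> loops X \<and> l ` {0..1} \<subseteq> V1 \<inter> V2 \<longrightarrow> ins l f e \<in> a \<inter> b)"
      proof (intro conjI allI impI)
        show "openin X (V1 \<inter> V2)" using A(1) B(1) by (rule openin_Int)
        show "0 \<in> V1 \<inter> V2" using A(2) B(2) by simp
        show "0 < min e1 e2" using A(3) B(3) by simp
        fix e l assume H: "0 < e \<and> e < min e1 e2 \<and> l \<in> loops X \<and> l ` {0..1} \<subseteq> V1 \<inter> V2"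
        show "ins l f e \<in> a \<inter> b"
        proof
          show "ins l f e \<in> a" using A(4)[of e l] H by auto
          show "ins l f e \<in> b" using B(4)[of e l] H by auto
        qed
      qed
      show "\<exists>V e0. openin X V \<and> 0 \<in> V \<and> 0 < e0 \<and>
          (\<forall>e l. 0 < e \<and> e < e0 \<and> l \<in> loops X \<and> l ` {0..1} \<subseteq> V \<longrightarrow> ins l f e \<in> a \<inter> b)"
        by (rule exI[of _ "V1 \<inter> V2"], rule exI[of _ "min e1 e2"], rule C)
    qed
  next
    case (UN K)
    show ?case unfolding Qp_def
    proof
      fix f assume "f \<in> \<Union>K"
      then obtain k where k: "k \<in> K" "f \<in> k" by auto
      have "Qp X k" using UN(2)[OF k(1)] .
      then have "\<exists>V e0. openin X V \<and> 0 \<in> V \<and> 0 < e0 \<and>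
          (\<forall>e l. 0 < e \<and> e < e0 \<and> l \<in> loops X \<and> l ` {0..1} \<subseteq> V \<longrightarrow> ins l f e \<in> k)"
        using k(2) unfolding Qp_def by (rule bspec)
      then obtain V e0 where A: "openin X V \<and> 0 \<in> V \<and> 0 < e0 \<and>
          (\<forall>e l. 0 < e \<and> e < e0 \<and> l \<in> loops X \<and> l ` {0..1} \<subseteq> V \<longrightarrow> ins l f e \<in> k)"
        by (elim exE)
      have "k \<subseteq> \<Union>K" using k(1) by auto
      then have B: "openin X V \<and> 0 \<in> V \<and> 0 < e0 \<and>
          (\<forall>e l. 0 < e \<and> e < e0 \<and> l \<in> loops X \<and> l ` {0..1} \<subseteq> V \<longrightarrow> ins l f e \<in> \<Union>K)"
        using A by blast
      show "\<exists>V e0. openin X V \<and> 0 \<in> V \<and> 0 < e0 \<and>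
          (\<forall>e l. 0 < e \<and> e < e0 \<and> l \<in> loops X \<and> l ` {0..1} \<subseteq> V \<longrightarrow> ins l f e \<in> \<Union>K)"
        by (rule exI[of _ V], rule exI[of _ e0], rule B)
    qed
  next
    case (Basis s)
    then obtain K U where "s = {f \<in> loops X. f ` K \<subseteq> U}" "K \<subseteq> {0..1}" "compact K" "openin X U"
      by blast
    then show ?case using Qp_basis by simp
  qed
qed


definition rcat :: "(real \<Rightarrow> real \<times> real) \<Rightarrow> (real \<Rightarrow> real \<times> real) \<Rightarrow> real \<Rightarrow> real \<times> real" where
  "rcat g f = restrict (\<lambda>t. if t \<le> 1/2 then g (2 * t) else f (2 - 2 * t)) {0..1}"

lemma rcat_loop:
  assumes g: "g \<in> loops X" and f: "f \<in> loops X"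
  shows "rcat g f \<in> loops X"
  unfolding rcat_def
proof (rule loops_restrict)
  show "continuous_map (top_of_set {0..1}) X (\<lambda>t. if t \<le> 1/2 then g (2 * t) else f (2 - 2 * t))"
  proof (rule paste_real[where h = "\<lambda>t. t" and c = "1/2" and f = "\<lambda>t. g (2 * t)" and g = "\<lambda>t. f (2 - 2 * t)"])
    show "continuous_map (top_of_set {x \<in> {0..1}. x \<le> 1/2}) X (\<lambda>t. g (2 * t))"
      by (rule cont_comp_real[OF loops_cont[OF g]]) (auto intro!: continuous_intros)
    show "continuous_map (top_of_set {x \<in> {0..1}. 1/2 \<le> x}) X (\<lambda>t. f (2 - 2 * t))"
      by (rule cont_comp_real[OF loops_cont[OF f]]) (auto intro!: continuous_intros)
    show "continuous_on {0..1} (\<lambda>t. t)" by (rule continuous_on_id)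
    fix x :: real assume "x \<in> {0..1}" "x = 1/2"
    then have "2 * x = 1" "2 - 2 * x = 1" by auto
    then show "g (2 * x) = f (2 - 2 * x)" using loops_1[OF g] loops_1[OF f] by simp
  qed
  show "(if (0::real) \<le> 1/2 then g (2 * 0) else f (2 - 2 * 0)) = 0" using loops_0[OF g] by simp
  show "(if (1::real) \<le> 1/2 then g (2 * 1) else f (2 - 2 * 1)) = 0" using loops_0[OF f] by simp
qed

definition psi1 :: "real \<Rightarrow> real \<Rightarrow> real" where
  "psi1 e t = (if t \<le> e then 2 * t / e else 2 - (t - e) / (1 - e))"

lemma psi1_cont:
  assumes e: "0 < e" "e < 1"
  shows "continuous_on {0..1} (psi1 e)"
  unfolding psi1_def
proof (rule continuous_on_cases_le[where h = "\<lambda>t. t"])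
  show "continuous_on {t \<in> {0..1}. t \<le> e} (\<lambda>t. 2 * t / e)" using e by (intro continuous_intros) auto
  show "continuous_on {t \<in> {0..1}. e \<le> t} (\<lambda>t. 2 - (t - e) / (1 - e))"
    using e by (intro continuous_intros) auto
  show "continuous_on {0..1} (\<lambda>t. t)" by (rule continuous_on_id)
  show "\<And>t. t \<in> {0..1} \<Longrightarrow> t = e \<Longrightarrow> 2 * t / e = 2 - (t - e) / (1 - e)" using e by simp
qed

lemma psi1_range:
  assumes e: "0 < e" "e < 1" and t: "0 \<le> t" "t \<le> 1"
  shows "0 \<le> psi1 e t" "psi1 e t \<le> 2"
proof -
  have "0 \<le> psi1 e t \<and> psi1 e t \<le> 2"
  proof (cases "t \<le> e")
    case True
    then show ?thesis using e t unfolding psi1_def by (auto simp: field_simps)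
  next
    case False
    have "(t - e) / (1 - e) \<le> 1" using e t by (auto simp: field_simps)
    moreover have "0 \<le> (t - e) / (1 - e)" using e False by auto
    ultimately show ?thesis using False unfolding psi1_def by auto
  qed
  then show "0 \<le> psi1 e t" "psi1 e t \<le> 2" by auto
qed

lemma restrict_loop: "g \<in> loops X \<Longrightarrow> restrict g {0..1} = g"
  using loops_ext extensional_restrict by blast

lemma path_g_ins:
  assumes g: "g \<in> loops X" and f: "f \<in> loops X" and e: "0 < e" "e < 1"
  shows "path_component_of (compact_open_loops X) g (ins (rcat g f) f e)"
proof -
  define G where "G \<tau> = (if \<tau> \<le> 1 then g \<tau> else f (2 - \<tau>))" for \<tau> :: real
  have Gc: "continuous_map (top_of_set {0..2}) X G"
    unfolding G_def
  proof (rule paste_real[where h = "\<lambda>t. t" and c = 1 and f = "\<lambda>t. g t" and g = "\<lambda>t. f (2 - t)"])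
    show "continuous_map (top_of_set {x \<in> {0..2}. x \<le> 1}) X (\<lambda>t. g t)"
      by (rule cont_comp_real[OF loops_cont[OF g]]) (auto intro!: continuous_intros)
    show "continuous_map (top_of_set {x \<in> {0..2}. 1 \<le> x}) X (\<lambda>t. f (2 - t))"
      by (rule cont_comp_real[OF loops_cont[OF f]]) (auto intro!: continuous_intros)
    show "continuous_on {0..2} (\<lambda>t. t)" by (rule continuous_on_id)
    fix x :: real assume "x \<in> {0..2}" "x = 1"
    then show "g x = f (2 - x)" using loops_1[OF g] loops_1[OF f] by simp
  qed
  define a where "a p = (1 - fst p) * snd p + fst p * psi1 e (snd p)" for p :: "real \<times> real"
  have ac: "continuous_on ({0..1} \<times> {0..1}) a"
  proof -
    have "continuous_on ({0..1} \<times> {0..1}) (\<lambda>p. psi1 e (snd p))"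
      by (rule continuous_on_compose2[OF psi1_cont[OF e] continuous_on_snd]) auto
    then show ?thesis unfolding a_def by (intro continuous_intros)
  qed
  have ar: "a ` ({0..1} \<times> {0..1}) \<subseteq> {0..2}"
  proof
    fix y assume "y \<in> a ` ({0..1} \<times> {0..1})"
    then obtain s t where st: "s \<in> {0..1}" "t \<in> {0..1}" "y = a (s, t)" by auto
    have p: "0 \<le> psi1 e t" "psi1 e t \<le> 2" using psi1_range[OF e] st by auto
    have "(1 - s) * t \<le> (1 - s) * 2" using st by (intro mult_left_mono) auto
    moreover have "s * psi1 e t \<le> s * 2" using st p by (intro mult_left_mono) auto
    moreover have "0 \<le> (1 - s) * t" "0 \<le> s * psi1 e t" using st p by auto
    ultimately show "y \<in> {0..2}" using st unfolding a_def by (auto simp: algebra_simps)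
  qed
  define K where "K p = G (a p)" for p
  have Kc: "continuous_map (top_of_set ({0..1} \<times> {0..1})) X K"
    unfolding K_def by (rule cont_comp_real[OF Gc ac ar])
  have psi0: "psi1 e 0 = 0" and psi1: "psi1 e 1 = 1" using e unfolding psi1_def by auto
  have K0: "K (s, 0) = 0" for s
    unfolding K_def a_def G_def using psi0 loops_0[OF g] by simp
  have K1: "K (s, 1) = 0" for s
    unfolding K_def a_def G_def using psi1 loops_1[OF g] by (simp add: algebra_simps)
  have P: "path_component_of (compact_open_loops X) (restrict (\<lambda>t. K (0, t)) {0..1}) (restrict (\<lambda>t. K (1, t)) {0..1})"
    by (rule homotopy_path[OF Kc]) (use K0 K1 in auto)
  have E0: "restrict (\<lambda>t. K (0, t)) {0..1} = g"
  proof -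
    have "restrict (\<lambda>t. K (0, t)) {0..1} = restrict g {0..1}"
      by (rule restrict_ext) (auto simp: K_def a_def G_def)
    then show ?thesis using restrict_loop[OF g] by simp
  qed
  have E1: "restrict (\<lambda>t. K (1, t)) {0..1} = ins (rcat g f) f e"
    unfolding ins_def
  proof (rule restrict_ext)
    fix t :: real assume t: "t \<in> {0..1}"
    have K1t: "K (1, t) = G (psi1 e t)" unfolding K_def a_def by simp
    show "K (1, t) = (if t \<le> e then rcat g f (t / e) else f ((t - e) / (1 - e)))"
    proof (cases "t \<le> e")
      case True
      have te: "t / e \<in> {0..1}" using True t e by auto
      have eq: "(t / e \<le> 1/2) = (2 * t / e \<le> 1)" using e by (auto simp: field_simps)
      have "rcat g f (t / e) = (if t / e \<le> 1/2 then g (2 * (t / e)) else f (2 - 2 * (t / e)))"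
        unfolding rcat_def using te by simp
      then show ?thesis using True K1t eq unfolding psi1_def G_def by simp
    next
      case False
      show ?thesis
      proof (cases "t = 1")
        case True
        then show ?thesis using False K1t e loops_1[OF g] loops_1[OF f] unfolding psi1_def G_def by simp
      next
        case t1: False
        have "(t - e) / (1 - e) < 1" using e t t1 False by (auto simp: field_simps)
        then have "\<not> 2 - (t - e) / (1 - e) \<le> 1" by simp
        then show ?thesis using False K1t unfolding psi1_def G_def by simp
      qed
    qed
  qed
  show ?thesis using P E0 E1 by simp
qed

context hat
begin

lemma path_ins_shrunk:
  assumes \<gamma>: "\<gamma> \<in> loops T" and f: "f \<in> loops T" and N: "N \<ge> 1" and e: "0 < e" "e < 1"
  shows "path_component_of (compact_open_loops T) (ins \<gamma> f e) (ins (restrict (\<lambda>t. Phi N 1 (\<gamma> t)) {0..1}) f e)"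
proof -
  have gc: "continuous_map (top_of_set {0..1}) T \<gamma>" by (rule loops_cont[OF \<gamma>])
  define K where "K p = (if snd p \<le> e then Phi N (fst p) (\<gamma> (snd p / e)) else f ((snd p - e) / (1 - e)))"
    for p :: "real \<times> real"
  have Kc: "continuous_map (top_of_set ({0..1} \<times> {0..1})) T K"
    unfolding K_def
  proof (rule paste_real[where h = snd and c = e and f = "\<lambda>p. Phi N (fst p) (\<gamma> (snd p / e))"
        and g = "\<lambda>p. f ((snd p - e) / (1 - e))"])
    have "continuous_map (top_of_set {x \<in> {0..1} \<times> {0..1}. snd x \<le> e}) T
        (\<lambda>p. (\<lambda>q. Phi N (fst q) (\<gamma> (snd q))) ((\<lambda>p. (fst p, snd p / e)) p))"
    proof (rule cont_comp_real[OF H_cont[OF gc N]])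
      show "continuous_on {x \<in> {0..1} \<times> {0..1}. snd x \<le> e} (\<lambda>p. (fst p, snd p / e))"
        by (intro continuous_intros) (use e in auto)
      show "(\<lambda>p. (fst p, snd p / e)) ` {x \<in> {0..1} \<times> {0..1}. snd x \<le> e} \<subseteq> {0..1} \<times> {0..1}"
        using e by auto
    qed
    then show "continuous_map (top_of_set {x \<in> {0..1} \<times> {0..1}. snd x \<le> e}) T
        (\<lambda>p. Phi N (fst p) (\<gamma> (snd p / e)))" by simp
    show "continuous_map (top_of_set {x \<in> {0..1} \<times> {0..1}. e \<le> snd x}) T (\<lambda>p. f ((snd p - e) / (1 - e)))"
    proof (rule cont_comp_real[OF loops_cont[OF f]])
      show "continuous_on {x \<in> {0..1} \<times> {0..1}. e \<le> snd x} (\<lambda>p. (snd p - e) / (1 - e))"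
        by (intro continuous_intros) (use e in auto)
      show "(\<lambda>p. (snd p - e) / (1 - e)) ` {x \<in> {0..1} \<times> {0..1}. e \<le> snd x} \<subseteq> {0..1}"
        using e by (auto simp: field_simps)
    qed
    show "continuous_on ({0..1} \<times> {0..1}) snd" by (rule continuous_on_snd[OF continuous_on_id])
    fix x :: "real \<times> real" assume "x \<in> {0..1} \<times> {0..1}" "snd x = e"
    then show "Phi N (fst x) (\<gamma> (snd x / e)) = f ((snd x - e) / (1 - e))"
      using e loops_1[OF \<gamma>] loops_0[OF f] by simp
  qed
  have K0: "K (s, 0) = 0" for s unfolding K_def using e loops_0[OF \<gamma>] by simp
  have K1: "K (s, 1) = 0" for s unfolding K_def using e loops_1[OF f] by simp
  have P: "path_component_of (compact_open_loops T) (restrict (\<lambda>t. K (0, t)) {0..1}) (restrict (\<lambda>t. K (1, t)) {0..1})"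
    by (rule homotopy_path[OF Kc]) (use K0 K1 in auto)
  have E0: "restrict (\<lambda>t. K (0, t)) {0..1} = ins \<gamma> f e"
    unfolding ins_def by (rule restrict_ext) (simp add: K_def Phi_0)
  have E1: "restrict (\<lambda>t. K (1, t)) {0..1} = ins (restrict (\<lambda>t. Phi N 1 (\<gamma> t)) {0..1}) f e"
    unfolding ins_def
  proof (rule restrict_ext)
    fix t :: real assume t: "t \<in> {0..1}"
    show "K (1, t) = (if t \<le> e then restrict (\<lambda>t. Phi N 1 (\<gamma> t)) {0..1} (t / e) else f ((t - e) / (1 - e)))"
    proof (cases "t \<le> e")
      case True
      then have "t / e \<in> {0..1}" using t e by auto
      then show ?thesis using True unfolding K_def by simp
    next
      case False
      then show ?thesis unfolding K_def by simp
    qed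
  qed
  show ?thesis using P E0 E1 by simp
qed

lemma shrunk_loop:
  assumes \<gamma>: "\<gamma> \<in> loops T" and N: "N \<ge> 1"
  shows "restrict (\<lambda>t. Phi N 1 (\<gamma> t)) {0..1} \<in> loops T"
proof (rule loops_restrict)
  have "continuous_map (top_of_set {0..1}) T (\<lambda>t. (\<lambda>q. Phi N (fst q) (\<gamma> (snd q))) ((\<lambda>t. (1::real, t)) t))"
    by (rule cont_comp_real[OF H_cont[OF loops_cont[OF \<gamma>] N]]) (auto intro!: continuous_intros)
  then show "continuous_map (top_of_set {0..1}) T (\<lambda>t. Phi N 1 (\<gamma> t))" by simp
  show "Phi N 1 (\<gamma> 0) = 0" using loops_0[OF \<gamma>] by simp
  show "Phi N 1 (\<gamma> 1) = 0" using loops_1[OF \<gamma>] by simp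
qed

lemma approx:
  assumes f: "f \<in> loops T" and g: "g \<in> loops T" and Os: "openin (compact_open_loops T) Os" and fO: "f \<in> Os"
  shows "\<exists>h\<in>Os. path_component_of (compact_open_loops T) g h"
proof -
  have "Qp T Os" using Os by (rule open_Qp)
  then have "\<exists>V e0. openin T V \<and> 0 \<in> V \<and> 0 < e0 \<and>
      (\<forall>e l. 0 < e \<and> e < e0 \<and> l \<in> loops T \<and> l ` {0..1} \<subseteq> V \<longrightarrow> ins l f e \<in> Os)"
    using fO unfolding Qp_def by (rule bspec)
  then obtain V e0 where V: "openin T V \<and> 0 \<in> V \<and> 0 < e0 \<and>
      (\<forall>e l. 0 < e \<and> e < e0 \<and> l \<in> loops T \<and> l ` {0..1} \<subseteq> V \<longrightarrow> ins l f e \<in> Os)"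
    by (elim exE)
  define e where "e = min (e0/2) (1/2)"
  have e: "0 < e" "e < 1" "e < e0" using V unfolding e_def by auto
  define \<gamma> where "\<gamma> = rcat g f"
  have \<gamma>l: "\<gamma> \<in> loops T" unfolding \<gamma>_def by (rule rcat_loop[OF g f])
  have V1: "openin T V" "0 \<in> V" "0 < e0"
    and V2: "\<And>e l. 0 < e \<and> e < e0 \<and> l \<in> loops T \<and> l ` {0..1} \<subseteq> V \<longrightarrow> ins l f e \<in> Os"
    using V by auto
  obtain N where N: "N \<ge> 1" "\<forall>t\<in>{0..1}. Phi N 1 (\<gamma> t) \<in> V"
    using shrink[OF loops_cont[OF \<gamma>l] V1(1) V1(2)] by (elim exE conjE)
  define l where "l = restrict (\<lambda>t. Phi N 1 (\<gamma> t)) {0..1}"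
  have ll: "l \<in> loops T" unfolding l_def by (rule shrunk_loop[OF \<gamma>l N(1)])
  have lV: "l ` {0..1} \<subseteq> V" unfolding l_def using N(2) by auto
  have hO: "ins l f e \<in> Os" using V2[of e l] e ll lV by simp
  have "path_component_of (compact_open_loops T) g (ins \<gamma> f e)"
    unfolding \<gamma>_def by (rule path_g_ins[OF g f e(1,2)])
  moreover have "path_component_of (compact_open_loops T) (ins \<gamma> f e) (ins l f e)"
    unfolding l_def by (rule path_ins_shrunk[OF \<gamma>l f N(1) e(1,2)])
  ultimately have "path_component_of (compact_open_loops T) g (ins l f e)"
    by (rule path_component_of_trans)
  then show ?thesis using hO by (rule_tac bexI)
qed

end


lemma quot_istopology:
  "istopology (\<lambda>U. U \<subseteq> q ` topspace X \<and> openin X {x \<in> topspace X. q x \<in> U})"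
  unfolding istopology_def
proof (rule conjI; (intro allI impI)?)
  fix S T
  assume S: "S \<subseteq> q ` topspace X \<and> openin X {x \<in> topspace X. q x \<in> S}"
    and T: "T \<subseteq> q ` topspace X \<and> openin X {x \<in> topspace X. q x \<in> T}"
  have e: "{x \<in> topspace X. q x \<in> S \<inter> T} = {x \<in> topspace X. q x \<in> S} \<inter> {x \<in> topspace X. q x \<in> T}" by auto
  show "S \<inter> T \<subseteq> q ` topspace X \<and> openin X {x \<in> topspace X. q x \<in> S \<inter> T}"
    using S T unfolding e by auto
next
  fix K assume K: "\<forall>S\<in>K. S \<subseteq> q ` topspace X \<and> openin X {x \<in> topspace X. q x \<in> S}"
  have e: "{x \<in> topspace X. q x \<in> \<Union>K} = \<Union>((\<lambda>S. {x \<in> topspace X. q x \<in> S}) ` K)" by auto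
  have "openin X (\<Union>((\<lambda>S. {x \<in> topspace X. q x \<in> S}) ` K))" using K by (intro openin_Union) auto
  then show "\<Union>K \<subseteq> q ` topspace X \<and> openin X {x \<in> topspace X. q x \<in> \<Union>K}"
    using K unfolding e by auto
qed

lemma openin_quot:
  "openin (quotient_topology X q) U \<longleftrightarrow> U \<subseteq> q ` topspace X \<and> openin X {x \<in> topspace X. q x \<in> U}"
  unfolding quotient_topology_def using quot_istopology[of q X] by simp

lemma topspace_quot: "topspace (quotient_topology X q) = q ` topspace X"
proof -
  have "{x \<in> topspace X. q x \<in> q ` topspace X} = topspace X" by auto
  then have "openin (quotient_topology X q) (q ` topspace X)"
    unfolding openin_quot by auto
  moreover have "U \<subseteq> q ` topspace X" if "openin (quotient_topology X q) U" for U
    using that unfolding openin_quot by auto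
  ultimately show ?thesis unfolding topspace_def by blast
qed

theorem corollary10:
  assumes "HA_topology T"
  shows "{U. openin (pi1_top T) U \<and> U \<noteq> {}} = {topspace (pi1_top T)}"
proof -
  interpret hat T by unfold_locales (rule assms)
  define X where "X = compact_open_loops T"
  define q where "q = path_component_of_set X"
  have tX: "topspace X = loops T" unfolding X_def by (rule topspace_col)
  have pt: "pi1_top T = quotient_topology X q" unfolding pi1_top_def X_def q_def by simp
  have top: "topspace (pi1_top T) = q ` loops T" unfolding pt topspace_quot tX ..
  have c0: "restrict (\<lambda>t. 0) {0..1} \<in> loops T"
    by (rule loops_restrict) (use topT zero_Yup in auto)
  show ?thesis
  proof (rule set_eqI, rule iffI)
    fix U assume "U \<in> {U. openin (pi1_top T) U \<and> U \<noteq> {}}"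
    then have U: "openin (pi1_top T) U" "U \<noteq> {}" by auto
    then have Usub: "U \<subseteq> q ` loops T" and Uo: "openin X {x \<in> loops T. q x \<in> U}"
      unfolding pt openin_quot tX by auto
    obtain c where c: "c \<in> U" using U(2) by auto
    then obtain f where f: "f \<in> loops T" "c = q f" using Usub by auto
    have "q ` loops T \<subseteq> U"
    proof
      fix d assume "d \<in> q ` loops T"
      then obtain g where g: "g \<in> loops T" "d = q g" by auto
      obtain h where h: "h \<in> {x \<in> loops T. q x \<in> U}" "path_component_of X g h"
        using approx[OF f(1) g(1) Uo[unfolded X_def]] f c unfolding X_def by auto
      have "path_component_of X g = path_component_of X h"
        using h(2) path_component_of_equiv by metis
      then have "q g = q h" unfolding q_def by simp
      then show "d \<in> U" using g h by auto
    qed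
    then have "U = topspace (pi1_top T)" using Usub top by auto
    then show "U \<in> {topspace (pi1_top T)}" by simp
  next
    fix U assume "U \<in> {topspace (pi1_top T)}"
    then have U: "U = q ` loops T" using top by simp
    have "openin (pi1_top T) U" using U by (simp add: openin_topspace[of "pi1_top T", unfolded top])
    moreover have "U \<noteq> {}" using U c0 by auto
    ultimately show "U \<in> {U. openin (pi1_top T) U \<and> U \<noteq> {}}" by simp
  qed
qed


end
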